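(* Let $K,N$ be symmetric homogeneous stable means and $M$ a symmetric homogeneous mean, all having symmetric asymptotic expansions with coefficients $(a^K_n),(a^N_n),(a^M_n)$. If $M$ is simultaneously $(K,N)$-stabilizable and $(K,N)$-stabilized, then $a^K_1=a^N_1=a^M_1$, hence $a^K_n=a^N_n$ for all $n\in\mathbb N_0$, and $a^M_2=\frac16a^M_1(1+a^M_1)(1-4a^M_1)$.
   Context: A bi-variate mean is $M:(0,\infty)^2\to(0,\infty)$ with $\min\le M\le\max$; symmetric and homogeneous (degree 1). $M$ is stable if $M(s,t)=M\big(M(s,M(s,t)),M(M(s,t),t)\big)$. For stable $K,N$: $M$ is $(K,N)$-stabilizable if $M(s,t)=K\big(M(s,N(s,t)),M(N(s,t),t)\big)$, and $(K,N)$-stabilized if $M(s,t)=K\big(N(s,M(s,t)),N(M(s,t),t)\big)$, for all $s,t>0$. A mean has a symmetric asymptotic expansion with coefficients $(a_n)$ if for every fixed real $t$ and $N\ge0$, $M(x-t,x+t)=\sum_{n=0}^Na_nt^{2n}x^{-2n+1}+o(x^{-2N+1})$ as $x\to\infty$. *)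

theory Defs
  imports "HOL-Analysis.Analysis" "HOL-Library.Landau_Symbols"
begin

text \<open>Bivariate means on (0,inf)^2, represented as real functions of two arguments;
  only their values on positive arguments matter.\<close>

definition is_mean :: "(real \<Rightarrow> real \<Rightarrow> real) \<Rightarrow> bool" where
  "is_mean M \<longleftrightarrow> (\<forall>s>0. \<forall>t>0. min s t \<le> M s t \<and> M s t \<le> max s t)"

definition symmetric_mean :: "(real \<Rightarrow> real \<Rightarrow> real) \<Rightarrow> bool" where
  "symmetric_mean M \<longleftrightarrow> (\<forall>s>0. \<forall>t>0. M s t = M t s)"

definition homogeneous_mean :: "(real \<Rightarrow> real \<Rightarrow> real) \<Rightarrow> bool" where
  "homogeneous_mean M \<longleftrightarrow> (\<forall>l>0. \<forall>s>0. \<forall>t>0. M (l * s) (l * t) = l * M s t)"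

definition stable_mean :: "(real \<Rightarrow> real \<Rightarrow> real) \<Rightarrow> bool" where
  "stable_mean M \<longleftrightarrow> (\<forall>s>0. \<forall>t>0. M s t = M (M s (M s t)) (M (M s t) t))"

definition stabilizable :: "(real \<Rightarrow> real \<Rightarrow> real) \<Rightarrow> (real \<Rightarrow> real \<Rightarrow> real) \<Rightarrow> (real \<Rightarrow> real \<Rightarrow> real) \<Rightarrow> bool" where
  "stabilizable K N M \<longleftrightarrow> (\<forall>s>0. \<forall>t>0. M s t = K (M s (N s t)) (M (N s t) t))"

definition stabilized :: "(real \<Rightarrow> real \<Rightarrow> real) \<Rightarrow> (real \<Rightarrow> real \<Rightarrow> real) \<Rightarrow> (real \<Rightarrow> real \<Rightarrow> real) \<Rightarrow> bool" where
  "stabilized K N M \<longleftrightarrow> (\<forall>s>0. \<forall>t>0. M s t = K (N s (M s t)) (N (M s t) t))"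

definition sym_asymp_expansion :: "(real \<Rightarrow> real \<Rightarrow> real) \<Rightarrow> (nat \<Rightarrow> real) \<Rightarrow> bool" where
  "sym_asymp_expansion M a \<longleftrightarrow>
     (\<forall>t::real. \<forall>N::nat.
        (\<lambda>x. M (x - t) (x + t) - (\<Sum>n\<le>N. a n * t ^ (2 * n) * x powr (1 - 2 * real n)))
          \<in> o[at_top](\<lambda>x. x powr (1 - 2 * real N)))"

end

theory Submission
  imports Defs
begin

definition fm :: "(real \<Rightarrow> real \<Rightarrow> real) \<Rightarrow> real \<Rightarrow> real" where
  "fm X w = X (1 - w) (1 + w)"

lemma mean_diag: "is_mean X \<Longrightarrow> x > 0 \<Longrightarrow> X x x = x"
  unfolding is_mean_def by (metis min.idem max.idem order_antisym)

lemma fm_even: "symmetric_mean X \<Longrightarrow> \<bar>w\<bar> < 1 \<Longrightarrow> fm X (-w) = fm X w"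
  unfolding symmetric_mean_def fm_def by auto

lemma mean_eval:
  assumes "homogeneous_mean X" "p > 0" "q > 0"
  shows "X p q = (p+q)/2 * fm X (((q-p)/2) / ((p+q)/2))"
proof -
  define c where "c = (p+q)/2"
  define w where "w = ((q-p)/2)/((p+q)/2)"
  have c: "c > 0" using assms c_def by simp
  have 1: "1 - w = p / c" using c unfolding c_def w_def by (simp add: field_simps)
  have 2: "1 + w = q / c" using c unfolding c_def w_def by (simp add: field_simps)
  have "X p q = X (c * (p/c)) (c * (q/c))" using c by simp
  also have "\<dots> = c * X (p/c) (q/c)"
    using assms(1)[unfolded homogeneous_mean_def, rule_format, of c "p/c" "q/c"] c assms(2,3) by simp
  finally show ?thesis unfolding fm_def using 1 2 c_def w_def by simp
qed

lemma pow_inv_key: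
  fixes w :: real assumes "w > 0"
  shows "inverse w powr (1 - 2 * real n) = inverse w * w ^ (2*n)"
proof -
  have "w powr (1 - 2*real n) = w / w^(2*n)"
    using powr_diff[of w 1 "2*real n"] powr_realpow[of w "2*n"] assms by simp
  then have "inverse w powr (1 - 2 * real n) = inverse (w / w^(2*n))" by (simp only: inverse_powr)
  then show ?thesis using assms by (simp add: field_simps)
qed

lemma exp_right:
  assumes hom: "homogeneous_mean X" and ex: "sym_asymp_expansion X a"
  shows "(\<lambda>w. fm X w - (\<Sum>n\<le>N. a n * w^(2*n))) \<in> o[at_right 0](\<lambda>w. w^(2*N))"
proof -
  define g where "g = (\<lambda>x. X (x - 1) (x + 1) - (\<Sum>n\<le>N. a n * 1 ^ (2 * n) * x powr (1 - 2 * real n)))"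
  have gx: "g \<in> o[at_top](\<lambda>x. x powr (1 - 2 * real N))"
    using ex unfolding sym_asymp_expansion_def g_def by (metis (no_types, lifting) ext)
  have c1: "(\<lambda>w. g (inverse w)) \<in> o[at_right 0](\<lambda>w. inverse w powr (1 - 2*real N))"
    by (rule landau_o.small.compose[OF gx filterlim_inverse_at_top_right])
  have ev: "eventually (\<lambda>w::real. 0 < w \<and> w < 1) (at_right 0)"
    using eventually_at_right_real[of 0 1] by (simp add: greaterThanLessThan_iff)
  have e1: "eventually (\<lambda>w. g (inverse w) = inverse w * (fm X w - (\<Sum>n\<le>N. a n * w^(2*n)))) (at_right 0)"
    using ev
  proof eventually_elim
    case (elim w)
    have "X (inverse w - 1) (inverse w + 1) = X (inverse w * (1 - w)) (inverse w * (1 + w))"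
      using elim by (simp add: field_simps)
    also have "\<dots> = inverse w * fm X w" using hom elim unfolding homogeneous_mean_def fm_def by simp
    finally have A: "X (inverse w - 1) (inverse w + 1) = inverse w * fm X w" .
    have B: "(\<Sum>n\<le>N. a n * 1 ^ (2 * n) * inverse w powr (1 - 2 * real n)) = inverse w * (\<Sum>n\<le>N. a n * w^(2*n))"
    proof -
      have "a n * 1 ^ (2 * n) * inverse w powr (1 - 2 * real n) = inverse w * (a n * w^(2*n))" for n
        using pow_inv_key[of w n] elim by simp
      then have "(\<Sum>n\<le>N. a n * 1 ^ (2 * n) * inverse w powr (1 - 2 * real n)) = (\<Sum>n\<le>N. inverse w * (a n * w^(2*n)))"
        by (intro sum.cong) auto
      then show ?thesis by (simp only: sum_distrib_left)
    qed
    show ?case unfolding g_def using A B by (simp add: algebra_simps)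
  qed
  have e2: "eventually (\<lambda>w. inverse w powr (1 - 2*real N) = inverse w * w^(2*N)) (at_right 0)"
    using ev by eventually_elim (simp add: pow_inv_key)
  have c2: "(\<lambda>w. inverse w * (fm X w - (\<Sum>n\<le>N. a n * w^(2*n)))) \<in> o[at_right 0](\<lambda>w. inverse w * w^(2*N))"
    using c1 landau_o.small.in_cong[OF e1] landau_o.small.cong[OF e2] by simp
  have c3: "(\<lambda>w. w * (inverse w * (fm X w - (\<Sum>n\<le>N. a n * w^(2*n))))) \<in> o[at_right 0](\<lambda>w. w * (inverse w * w^(2*N)))"
    by (rule landau_o.small.mult_left[OF c2])
  have e3: "eventually (\<lambda>w. w * (inverse w * (fm X w - (\<Sum>n\<le>N. a n * w^(2*n)))) = fm X w - (\<Sum>n\<le>N. a n * w^(2*n))) (at_right 0)"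
    using ev by eventually_elim simp
  have e4: "eventually (\<lambda>w::real. w * (inverse w * w^(2*N)) = w^(2*N)) (at_right 0)"
    using ev by (rule eventually_mono) simp
  show ?thesis using c3 landau_o.small.in_cong[OF e3] landau_o.small.cong[OF e4] by simp
qed

lemma exp_at0:
  assumes sym: "symmetric_mean X" and hom: "homogeneous_mean X" and ex: "sym_asymp_expansion X a"
  shows "(\<lambda>w. fm X w - (\<Sum>n\<le>N. a n * w^(2*n))) \<in> o[at 0](\<lambda>w. w^(2*N))"
proof -
  define r where "r = (\<lambda>w. fm X w - (\<Sum>n\<le>N. a n * w^(2*n)))"
  have R: "r \<in> o[at_right 0](\<lambda>w. w^(2*N))" using exp_right[OF hom ex] unfolding r_def .
  have ev: "eventually (\<lambda>w::real. 0 < w \<and> w < 1) (at_right 0)"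
    using eventually_at_right_real[of 0 1] by (simp add: greaterThanLessThan_iff)
  have e: "eventually (\<lambda>w. r (-w) = r w) (at_right 0)"
    using ev by eventually_elim (simp add: r_def fm_even[OF sym])
  have "(\<lambda>w. r (-w)) \<in> o[at_right 0](\<lambda>w. (-w)^(2*N))"
    using R landau_o.small.in_cong[OF e] by (simp add: power_mult)
  then have L: "r \<in> o[at_left 0](\<lambda>w. w^(2*N))"
    using landau_o.small.in_filtermap_iff[of r uminus "at_right 0" "\<lambda>w. w^(2*N)"]
    by (simp add: at_left_minus)
  have "r \<in> o[sup (at_left 0) (at_right 0)](\<lambda>w. w^(2*N))"
    by (rule landau_o.small.sup[OF L R])
  then show ?thesis unfolding r_def by (simp add: at_eq_sup_left_right[symmetric])
qed

lemma ev_abs_lt: "e > 0 \<Longrightarrow> eventually (\<lambda>u::real. \<bar>u\<bar> < e) (at 0)"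
  unfolding eventually_at by (intro exI[of _ e]) (auto simp: dist_real_def)

lemma tendsto_O1: "(f \<longlongrightarrow> (c::real)) F \<Longrightarrow> f \<in> O[F](\<lambda>_. 1)"
  using bigoI_tendsto[of f "\<lambda>_. 1" c F] by simp

lemma tendsto_o1: "(f \<longlongrightarrow> (0::real)) F \<Longrightarrow> f \<in> o[F](\<lambda>_. 1)"
  using smalloI_tendsto[of f "\<lambda>_. 1" F] by simp

lemma o1_tendsto: "(f::_\<Rightarrow>real) \<in> o[F](\<lambda>_. 1) \<Longrightarrow> (f \<longlongrightarrow> 0) F"
  using smalloD_tendsto[of f F "\<lambda>_. 1"] by simp

lemma pow_O: "j \<le> k \<Longrightarrow> (\<lambda>u::real. u^k) \<in> O[at 0](\<lambda>u. u^j)"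
proof -
  assume jk: "j \<le> k"
  have "(\<lambda>u::real. u^(k-j)) \<in> O[at 0](\<lambda>_. 1)"
    by (rule tendsto_O1[of _ "0^(k-j)"]) (intro tendsto_intros)
  then have "(\<lambda>u::real. u^j * u^(k-j)) \<in> O[at 0](\<lambda>u. u^j * 1)"
    by (rule landau_o.big.mult_left)
  moreover have "(\<lambda>u::real. u^j * u^(k-j)) = (\<lambda>u. u^k)"
    using jk by (simp add: power_add[symmetric])
  ultimately show ?thesis by simp
qed

lemma pow_o: "j < k \<Longrightarrow> (\<lambda>u::real. u^k) \<in> o[at 0](\<lambda>u. u^j)"
proof -
  assume jk: "j < k"
  have t: "((\<lambda>u::real. u^(k-j)) \<longlongrightarrow> 0^(k-j)) (at 0)" by (intro tendsto_intros)
  have "(\<lambda>u::real. u^(k-j)) \<in> o[at 0](\<lambda>_. 1)"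
    by (rule tendsto_o1) (use t jk in simp)
  then have "(\<lambda>u::real. u^j * u^(k-j)) \<in> o[at 0](\<lambda>u. u^j * 1)"
    by (rule landau_o.small.mult_left)
  moreover have "(\<lambda>u::real. u^j * u^(k-j)) = (\<lambda>u. u^k)"
    using jk by (simp add: power_add[symmetric])
  ultimately show ?thesis by simp
qed

lemma small_tendsto_mult: "(h \<longlongrightarrow> (0::real)) F \<Longrightarrow> f \<in> O[F](g) \<Longrightarrow> (\<lambda>x. h x * f x) \<in> o[F](g)"
  using landau_o.small_big_mult[OF tendsto_o1, of h F f g] by simp

lemma big_bounded_mult: "(h::_\<Rightarrow>real) \<in> O[F](\<lambda>_. 1) \<Longrightarrow> f \<in> O[F](g) \<Longrightarrow> (\<lambda>x. h x * f x) \<in> O[F](g)"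
  using landau_o.big_mult[of h F "\<lambda>_. 1" f g] by simp

lemma small_bounded_mult: "(h::_\<Rightarrow>real) \<in> O[F](\<lambda>_. 1) \<Longrightarrow> f \<in> o[F](g) \<Longrightarrow> (\<lambda>x. h x * f x) \<in> o[F](g)"
  using landau_o.big_small_mult[of h F "\<lambda>_. 1" f g] by simp

lemma compose_rem:
  assumes r: "(r::real\<Rightarrow>real) \<in> o[at 0](\<lambda>w. w^m)" and r0: "r 0 = 0" and w: "(w \<longlongrightarrow> 0) F"
  shows "(\<lambda>u. r (w u)) \<in> o[F](\<lambda>u. (w u)^m)"
proof -
  have "r \<in> o[nhds 0](\<lambda>w. w^m)"
  proof (rule landau_o.smallI)
    fix c :: real assume c: "c > 0"
    have "eventually (\<lambda>x. norm (r x) \<le> c * norm (x^m)) (at 0)"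
      by (rule landau_o.smallD[OF r c])
    then show "eventually (\<lambda>x. norm (r x) \<le> c * norm (x^m)) (nhds 0)"
      using r0 c by (simp add: eventually_nhds_conv_at)
  qed
  then show ?thesis by (rule landau_o.small.compose) (use w in \<open>simp add: filterlim_def\<close>)
qed

definition good :: "(real \<Rightarrow> real \<Rightarrow> real) \<Rightarrow> (nat \<Rightarrow> real) \<Rightarrow> bool" where
  "good X a \<longleftrightarrow> is_mean X \<and> symmetric_mean X \<and> homogeneous_mean X \<and> sym_asymp_expansion X a"

definition rem :: "(real \<Rightarrow> real \<Rightarrow> real) \<Rightarrow> (nat \<Rightarrow> real) \<Rightarrow> nat \<Rightarrow> real \<Rightarrow> real" where
  "rem X a N w = fm X w - (\<Sum>n\<le>N. a n * w^(2*n))"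

lemma good_rem_o: "good X a \<Longrightarrow> rem X a N \<in> o[at 0](\<lambda>w. w^(2*N))"
  unfolding good_def rem_def using exp_at0 by (auto simp: fun_eq_iff)

lemma fm_lim:
  assumes "is_mean X" shows "(fm X \<longlongrightarrow> 1) (at 0)"
proof (rule tendsto_sandwich[of "\<lambda>w. 1 - \<bar>w\<bar>" _ _ "\<lambda>w. 1 + \<bar>w\<bar>"])
  have ev: "eventually (\<lambda>u::real. \<bar>u\<bar> < 1) (at 0)" by (rule ev_abs_lt) simp
  show "eventually (\<lambda>w. 1 - \<bar>w\<bar> \<le> fm X w) (at 0)" using ev
  proof eventually_elim
    case (elim w)
    have pos: "0 < 1-w" "0 < 1+w" using elim by auto
    have "min (1-w) (1+w) \<le> fm X w"
      using assms pos unfolding is_mean_def fm_def by blast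
    moreover have "min (1-w) (1+w) = 1 - \<bar>w\<bar>" by (auto simp: min_def abs_if)
    ultimately show ?case by simp
  qed
  show "eventually (\<lambda>w. fm X w \<le> 1 + \<bar>w\<bar>) (at 0)" using ev
  proof eventually_elim
    case (elim w)
    have pos: "0 < 1-w" "0 < 1+w" using elim by auto
    have "fm X w \<le> max (1-w) (1+w)"
      using assms pos unfolding is_mean_def fm_def by blast
    moreover have "max (1-w) (1+w) = 1 + \<bar>w\<bar>" by (auto simp: max_def abs_if)
    ultimately show ?case by simp
  qed
  have "((\<lambda>w::real. 1 - \<bar>w\<bar>) \<longlongrightarrow> 1 - \<bar>0\<bar>) (at 0)"
    by (intro tendsto_intros)
  then show "((\<lambda>w::real. 1 - \<bar>w\<bar>) \<longlongrightarrow> 1) (at 0)" by simp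
  have "((\<lambda>w::real. 1 + \<bar>w\<bar>) \<longlongrightarrow> 1 + \<bar>0\<bar>) (at 0)"
    by (intro tendsto_intros)
  then show "((\<lambda>w::real. 1 + \<bar>w\<bar>) \<longlongrightarrow> 1) (at 0)" by simp
qed

lemma fm0: "is_mean X \<Longrightarrow> fm X 0 = 1"
  unfolding fm_def using mean_diag[of X 1] by simp

lemma good_a0: assumes "good X a" shows "a 0 = 1"
proof -
  have "rem X a 0 \<in> o[at 0](\<lambda>w. w^(2*0))" by (rule good_rem_o[OF assms])
  moreover have "rem X a 0 = (\<lambda>w. fm X w - a 0)" by (simp add: rem_def fun_eq_iff)
  ultimately have "((\<lambda>w. fm X w - a 0) \<longlongrightarrow> 0) (at 0)"
    using o1_tendsto[of "rem X a 0"] by simp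
  then have "((\<lambda>w. fm X w - a 0 + a 0) \<longlongrightarrow> 0 + a 0) (at 0)" by (rule tendsto_add[OF _ tendsto_const])
  then have "(fm X \<longlongrightarrow> a 0) (at 0)" by simp
  moreover have "(fm X \<longlongrightarrow> 1) (at 0)" using assms fm_lim unfolding good_def by blast
  ultimately show ?thesis by (rule tendsto_unique[OF at_neq_bot])
qed

lemma sum_at0: "(\<Sum>n\<le>N. a n * (0::real)^(2*n)) = a 0"
  by (induction N) auto

lemma good_rem0: "good X a \<Longrightarrow> rem X a N 0 = 0"
  using good_a0[of X a] fm0[of X] unfolding rem_def good_def
  by (simp add: sum_at0)

lemma fm_cont: assumes "is_mean X" shows "isCont (fm X) 0"
  using fm_lim[OF assms] unfolding isCont_def fm0[OF assms] .

definition cc :: "(real \<Rightarrow> real) \<Rightarrow> (real \<Rightarrow> real) \<Rightarrow> real \<Rightarrow> real" where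
  "cc p q u = (p u + q u) / 2"
definition ww :: "(real \<Rightarrow> real) \<Rightarrow> (real \<Rightarrow> real) \<Rightarrow> real \<Rightarrow> real" where
  "ww p q u = ((q u - p u) / 2) / ((p u + q u) / 2)"

lemma cc_lim: assumes "(p \<longlongrightarrow> 1) F" "(q \<longlongrightarrow> 1) F" shows "(cc p q \<longlongrightarrow> 1) F"
proof -
  have "((\<lambda>u. (p u + q u) / 2) \<longlongrightarrow> (1 + 1) / 2) F"
    by (rule tendsto_divide[OF tendsto_add[OF assms] tendsto_const]) simp
  then show ?thesis unfolding cc_def[abs_def] by simp
qed

lemma ww_lim: assumes "(p \<longlongrightarrow> 1) F" "(q \<longlongrightarrow> 1) F" shows "(ww p q \<longlongrightarrow> 0) F"
proof -
  have "((\<lambda>u. ((q u - p u) / 2) / ((p u + q u) / 2)) \<longlongrightarrow> ((1 - 1) / 2) / ((1 + 1) / 2)) F"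
    by (rule tendsto_divide[OF tendsto_divide[OF tendsto_diff[OF assms(2) assms(1)] tendsto_const]
         tendsto_divide[OF tendsto_add[OF assms] tendsto_const]]) simp_all
  then show ?thesis unfolding ww_def[abs_def] by simp
qed

lemma ev_pos: "(p \<longlongrightarrow> (1::real)) F \<Longrightarrow> eventually (\<lambda>u. p u > 0) F"
  by (erule order_tendstoD(1)) simp

lemma eval_ev:
  assumes "homogeneous_mean X" "(p \<longlongrightarrow> 1) F" "(q \<longlongrightarrow> 1) F"
  shows "eventually (\<lambda>u. X (p u) (q u) = cc p q u * fm X (ww p q u)) F"
  using ev_pos[OF assms(2)] ev_pos[OF assms(3)]
  by eventually_elim (simp add: mean_eval[OF assms(1)] cc_def ww_def)

lemma eval_exp:
  assumes g: "good X a" and p: "(p \<longlongrightarrow> 1) F" and q: "(q \<longlongrightarrow> 1) F"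
  shows "(\<lambda>u. X (p u) (q u) - cc p q u * (\<Sum>n\<le>N. a n * (ww p q u)^(2*n))) \<in> o[F](\<lambda>u. (ww p q u)^(2*N))"
proof -
  have hom: "homogeneous_mean X" using g good_def by blast
  have r: "(\<lambda>u. rem X a N (ww p q u)) \<in> o[F](\<lambda>u. (ww p q u)^(2*N))"
    by (rule compose_rem[OF good_rem_o[OF g] good_rem0[OF g] ww_lim[OF p q]])
  have r2: "(\<lambda>u. cc p q u * rem X a N (ww p q u)) \<in> o[F](\<lambda>u. (ww p q u)^(2*N))"
    by (rule small_bounded_mult[OF tendsto_O1[OF cc_lim[OF p q]] r])
  have ev: "eventually (\<lambda>u. cc p q u * rem X a N (ww p q u) =
      X (p u) (q u) - cc p q u * (\<Sum>n\<le>N. a n * (ww p q u)^(2*n))) F"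
    using eval_ev[OF hom p q] by eventually_elim (simp add: rem_def right_diff_distrib)
  show ?thesis using landau_o.small.in_cong[OF ev] r2 by blast
qed

lemma pow_step: "(w::real) * (w ^ m - v ^ m) + v ^ m * (w - v) = w ^ Suc m - v ^ Suc m"
  by (simp add: algebra_simps)

lemma powdiff_O:
  fixes w v :: "real \<Rightarrow> real"
  assumes w: "w \<in> O[F](\<lambda>u. u)" and v: "v \<in> O[F](\<lambda>u. u)" and wv: "(\<lambda>u. w u - v u) \<in> O[F](\<lambda>u. u^2)"
  shows "(\<lambda>u. w u ^ m - v u ^ m) \<in> O[F](\<lambda>u. u^(m+1))"
proof (induction m)
  case 0 then show ?case by simp
next
  case (Suc m)
  have 1: "(\<lambda>u. w u * (w u ^ m - v u ^ m)) \<in> O[F](\<lambda>u. u * u^(m+1))"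
    by (rule landau_o.big_mult[OF w Suc.IH])
  have 2: "(\<lambda>u. v u ^ m * (w u - v u)) \<in> O[F](\<lambda>u. u^m * u^2)"
    by (rule landau_o.big_mult[OF landau_o.big_power[OF v] wv])
  have e1: "(\<lambda>u::real. u * u^(m+1)) = (\<lambda>u. u^(Suc m + 1))" by (simp add: fun_eq_iff)
  have e2: "(\<lambda>u::real. u^m * u^2) = (\<lambda>u. u^(Suc m + 1))" by (simp add: fun_eq_iff power2_eq_square mult_ac)
  have "(\<lambda>u. w u * (w u ^ m - v u ^ m) + v u ^ m * (w u - v u)) \<in> O[F](\<lambda>u. u^(Suc m + 1))"
    using sum_in_bigo(1)[OF 1[unfolded e1] 2[unfolded e2]] .
  then show ?case by (simp only: pow_step)
qed

lemma powdiff_Og: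
  fixes w v :: "'a \<Rightarrow> real"
  assumes w: "(w \<longlongrightarrow> 0) F" and v: "(v \<longlongrightarrow> 0) F" and wv: "(\<lambda>u. w u - v u) \<in> O[F](g)"
  shows "(\<lambda>u. w u ^ m - v u ^ m) \<in> O[F](g)"
proof (induction m)
  case 0 then show ?case by simp
next
  case (Suc m)
  have 1: "(\<lambda>u. w u * (w u ^ m - v u ^ m)) \<in> O[F](g)"
    by (rule big_bounded_mult[OF tendsto_O1[OF w] Suc.IH])
  have vm: "((\<lambda>u. v u ^ m) \<longlongrightarrow> 0 ^ m) F" by (rule tendsto_power[OF v])
  have 2: "(\<lambda>u. v u ^ m * (w u - v u)) \<in> O[F](g)"
    by (rule big_bounded_mult[OF tendsto_O1[OF vm] wv])
  have "(\<lambda>u. w u * (w u ^ m - v u ^ m) + v u ^ m * (w u - v u)) \<in> O[F](g)"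
    by (rule sum_in_bigo(1)[OF 1 2])
  then show ?case by (simp only: pow_step)
qed

lemma powdiff_o:
  fixes w v :: "'a \<Rightarrow> real"
  assumes w: "(w \<longlongrightarrow> 0) F" and v: "(v \<longlongrightarrow> 0) F" and wv: "(\<lambda>u. w u - v u) \<in> O[F](g)"
    and m: "m \<ge> 2"
  shows "(\<lambda>u. w u ^ m - v u ^ m) \<in> o[F](g)"
proof -
  obtain j where j: "m = Suc j" "j \<ge> 1" using m by (cases m) auto
  have 1: "(\<lambda>u. w u * (w u ^ j - v u ^ j)) \<in> o[F](g)"
    by (rule small_tendsto_mult[OF w powdiff_Og[OF w v wv]])
  have z: "(0::real)^j = 0" using j by simp
  have vj: "((\<lambda>u. v u ^ j) \<longlongrightarrow> 0) F" using tendsto_power[OF v, of j] unfolding z .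
  have 2: "(\<lambda>u. v u ^ j * (w u - v u)) \<in> o[F](g)"
    by (rule small_tendsto_mult[OF vj wv])
  have "(\<lambda>u. w u * (w u ^ j - v u ^ j) + v u ^ j * (w u - v u)) \<in> o[F](g)"
    by (rule sum_in_smallo(1)[OF 1 2])
  then show ?thesis unfolding j(1) by (simp only: pow_step)
qed

lemma ww_O:
  assumes p: "(p \<longlongrightarrow> 1) F" and q: "(q \<longlongrightarrow> 1) F" and d: "(\<lambda>u. q u - p u) \<in> O[F](g)"
  shows "ww p q \<in> O[F](g)"
proof -
  have i: "((\<lambda>u. inverse (cc p q u)) \<longlongrightarrow> inverse 1) F"
    by (rule tendsto_inverse[OF cc_lim[OF p q]]) simp
  have d2: "(\<lambda>u. (q u - p u) / 2) \<in> O[F](g)" using d by simp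
  have O: "(\<lambda>u. inverse (cc p q u) * ((q u - p u) / 2)) \<in> O[F](g)"
    by (rule big_bounded_mult[OF tendsto_O1[OF i] d2])
  have eq: "(\<lambda>u. inverse (cc p q u) * ((q u - p u) / 2)) = ww p q"
    by (rule ext) (simp only: ww_def cc_def divide_inverse_commute)
  show ?thesis using O unfolding eq .
qed

lemma S_lim:
  fixes a :: "nat \<Rightarrow> real"
  assumes "(w \<longlongrightarrow> 0) F"
  shows "((\<lambda>u. (\<Sum>k\<le>n. a k * (w u)^(2*k))) \<longlongrightarrow> a 0) F"
proof -
  have "((\<lambda>u. (\<Sum>k\<le>n. a k * (w u)^(2*k))) \<longlongrightarrow> (\<Sum>k\<le>n. a k * (0::real)^(2*k))) F"
    by (intro tendsto_sum tendsto_mult tendsto_const tendsto_power assms)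
  then show ?thesis by (simp only: sum_at0)
qed

lemma alg_w:
  fixes C C' p q p' q' :: real
  assumes "C \<noteq> 0" "C' \<noteq> 0"
  shows "inverse (C * C') * (((q - q') - (p - p')) / 2 * C' - (q' - p') / 2 * (C - C'))
         = ((q - p)/2) / C - ((q' - p')/2) / C'"
  using assms by (simp add: field_simps)

lemma pert:
  assumes g: "good X a" and n1: "n \<ge> 1"
    and p: "(p \<longlongrightarrow> 1) (at 0)" and q: "(q \<longlongrightarrow> 1) (at 0)"
    and p': "(p' \<longlongrightarrow> 1) (at 0)" and q': "(q' \<longlongrightarrow> 1) (at 0)"
    and d: "(\<lambda>u. q u - p u) \<in> O[at 0](\<lambda>u. u)" and d': "(\<lambda>u. q' u - p' u) \<in> O[at 0](\<lambda>u. u)"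
    and dp: "(\<lambda>u. p u - p' u) \<in> O[at 0](\<lambda>u. u^(2*n))"
    and dq: "(\<lambda>u. q u - q' u) \<in> O[at 0](\<lambda>u. u^(2*n))"
  shows "(\<lambda>u. X (p u) (q u) - X (p' u) (q' u) - ((p u - p' u) + (q u - q' u)) / 2)
           \<in> o[at 0](\<lambda>u::real. u^(2*n))"
proof -
  define c where "c = cc p q"
  define c' where "c' = cc p' q'"
  define w where "w = ww p q"
  define w' where "w' = ww p' q'"
  define S where "S = (\<lambda>x::real. \<Sum>k\<le>n. a k * x^(2*k))"
  have a0: "a 0 = 1" by (rule good_a0[OF g])
  have cl: "(c \<longlongrightarrow> 1) (at 0)" "(c' \<longlongrightarrow> 1) (at 0)"
    unfolding c_def c'_def by (rule cc_lim[OF p q], rule cc_lim[OF p' q'])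
  have wl: "(w \<longlongrightarrow> 0) (at 0)" "(w' \<longlongrightarrow> 0) (at 0)"
    unfolding w_def w'_def by (rule ww_lim[OF p q], rule ww_lim[OF p' q'])
  have wO: "w \<in> O[at 0](\<lambda>u. u)" "w' \<in> O[at 0](\<lambda>u. u)"
    unfolding w_def w'_def by (rule ww_O[OF p q d], rule ww_O[OF p' q' d'])
  have wO2: "(\<lambda>u. w u ^ (2*n)) \<in> O[at 0](\<lambda>u. u^(2*n))" "(\<lambda>u. w' u ^ (2*n)) \<in> O[at 0](\<lambda>u. u^(2*n))"
    by (rule landau_o.big_power[OF wO(1)], rule landau_o.big_power[OF wO(2)])
  have E1: "(\<lambda>u. X (p u) (q u) - c u * S (w u)) \<in> o[at 0](\<lambda>u. u^(2*n))"
    using landau_o.small_big_trans[OF eval_exp[OF g p q, of n] wO2(1)[unfolded w_def]]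
    unfolding c_def w_def S_def .
  have E2: "(\<lambda>u. X (p' u) (q' u) - c' u * S (w' u)) \<in> o[at 0](\<lambda>u. u^(2*n))"
    using landau_o.small_big_trans[OF eval_exp[OF g p' q', of n] wO2(2)[unfolded w'_def]]
    unfolding c'_def w'_def S_def .
  have cdiff_eq: "c u - c' u = ((p u - p' u) + (q u - q' u)) / 2" for u
    unfolding c_def c'_def cc_def by (simp add: field_simps)
  have cdiff: "(\<lambda>u. c u - c' u) \<in> O[at 0](\<lambda>u. u^(2*n))"
    unfolding cdiff_eq using sum_in_bigo(1)[OF dp dq] by simp
  have ev: "eventually (\<lambda>u. c u > 0 \<and> c' u > 0) (at 0)"
    using ev_pos[OF cl(1)] ev_pos[OF cl(2)] by eventually_elim simp
  have ii: "((\<lambda>u. inverse (c u * c' u)) \<longlongrightarrow> inverse (1 * 1)) (at 0)"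
    by (rule tendsto_inverse[OF tendsto_mult[OF cl]]) simp
  have Dd: "(\<lambda>u. ((q u - q' u) - (p u - p' u)) / 2 * c' u) \<in> O[at 0](\<lambda>u. u^(2*n))"
  proof -
    have "(\<lambda>u. c' u * (((q u - q' u) - (p u - p' u)) / 2)) \<in> O[at 0](\<lambda>u. u^(2*n))"
      by (rule big_bounded_mult[OF tendsto_O1[OF cl(2)]]) (use sum_in_bigo(2)[OF dq dp] in simp)
    then show ?thesis by (simp add: mult.commute)
  qed
  have D'l: "((\<lambda>u. (q' u - p' u) / 2) \<longlongrightarrow> (1 - 1) / 2) (at 0)"
    by (rule tendsto_divide[OF tendsto_diff[OF q' p'] tendsto_const]) simp
  have Dc: "(\<lambda>u. (q' u - p' u) / 2 * (c u - c' u)) \<in> O[at 0](\<lambda>u. u^(2*n))"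
    by (rule big_bounded_mult[OF tendsto_O1[OF D'l] cdiff])
  have wdiff: "(\<lambda>u. w u - w' u) \<in> O[at 0](\<lambda>u. u^(2*n))"
  proof -
    have "(\<lambda>u. inverse (c u * c' u) * (((q u - q' u) - (p u - p' u)) / 2 * c' u - (q' u - p' u) / 2 * (c u - c' u)))
           \<in> O[at 0](\<lambda>u. u^(2*n))"
      by (rule big_bounded_mult[OF tendsto_O1[OF ii] sum_in_bigo(2)[OF Dd Dc]])
    moreover have "eventually (\<lambda>u. inverse (c u * c' u) * (((q u - q' u) - (p u - p' u)) / 2 * c' u - (q' u - p' u) / 2 * (c u - c' u))
           = w u - w' u) (at 0)"
      using ev
    proof eventually_elim
      case (elim u)
      then have nz: "c u \<noteq> 0" "c' u \<noteq> 0" by auto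
      have "w u = ((q u - p u)/2) / c u" "w' u = ((q' u - p' u)/2) / c' u"
        by (simp_all add: w_def w'_def ww_def c_def c'_def cc_def)
      then show ?case using alg_w[OF nz] by simp
    qed
    ultimately show ?thesis by (rule landau_o.big.in_cong[THEN iffD1, rotated])
  qed
  have Sdiff: "(\<lambda>u. S (w u) - S (w' u)) \<in> o[at 0](\<lambda>u. u^(2*n))"
  proof -
    have "(\<lambda>u. \<Sum>k\<le>n. a k * (w u ^ (2*k) - w' u ^ (2*k))) \<in> o[at 0](\<lambda>u. u^(2*n))"
    proof (rule big_sum_in_smallo)
      fix k assume "k \<in> {..n}"
      show "(\<lambda>u. a k * (w u ^ (2*k) - w' u ^ (2*k))) \<in> o[at 0](\<lambda>u. u^(2*n))"
      proof (cases "k = 0")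
        case True then show ?thesis by simp
      next
        case False
        then have "2*k \<ge> 2" by simp
        from powdiff_o[OF wl(1) wl(2) wdiff this]
        show ?thesis by (rule small_bounded_mult[OF bigo_const])
      qed
    qed
    then show ?thesis unfolding S_def by (simp add: sum_subtractf right_diff_distrib)
  qed
  have S1: "((\<lambda>u. S (w' u) - 1) \<longlongrightarrow> 0) (at 0)"
  proof -
    have "((\<lambda>u. S (w' u) - 1) \<longlongrightarrow> a 0 - 1) (at 0)"
      unfolding S_def by (rule tendsto_diff[OF S_lim[OF wl(2)] tendsto_const])
    then show ?thesis using a0 by simp
  qed
  have main: "(\<lambda>u. c u * (S (w u) - S (w' u)) + (S (w' u) - 1) * (c u - c' u)) \<in> o[at 0](\<lambda>u. u^(2*n))"
    by (rule sum_in_smallo(1)[OF small_bounded_mult[OF tendsto_O1[OF cl(1)] Sdiff] small_tendsto_mult[OF S1 cdiff]])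
  have "(\<lambda>u. (X (p u) (q u) - c u * S (w u)) - (X (p' u) (q' u) - c' u * S (w' u))
         + (c u * (S (w u) - S (w' u)) + (S (w' u) - 1) * (c u - c' u))) \<in> o[at 0](\<lambda>u. u^(2*n))"
    by (rule sum_in_smallo(1)[OF sum_in_smallo(2)[OF E1 E2] main])
  moreover have "(\<lambda>u. (X (p u) (q u) - c u * S (w u)) - (X (p' u) (q' u) - c' u * S (w' u))
         + (c u * (S (w u) - S (w' u)) + (S (w' u) - 1) * (c u - c' u)))
      = (\<lambda>u. X (p u) (q u) - X (p' u) (q' u) - ((p u - p' u) + (q u - q' u)) / 2)"
    by (rule ext) (simp add: c_def c'_def cc_def field_simps)
  ultimately show ?thesis by simp
qed

lemma sum_agree:
  fixes a b :: "nat \<Rightarrow> real" and n :: nat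
  assumes "\<forall>k<n. a k = b k"
  shows "(\<Sum>k\<le>n. a k * x k) - (\<Sum>k\<le>n. b k * x k) = (a n - b n) * (x n :: real)"
proof (cases n)
  case 0 then show ?thesis by (simp add: algebra_simps)
next
  case (Suc m)
  have "(\<Sum>k\<le>m. a k * x k) = (\<Sum>k\<le>m. b k * x k)" using assms Suc by (intro sum.cong) auto
  then show ?thesis using Suc by (simp add: algebra_simps)
qed

lemma diffXY:
  assumes gX: "good X a" and gY: "good Y b" and n1: "n \<ge> 1" and ag: "\<forall>k<n. a k = b k"
    and p: "(p \<longlongrightarrow> 1) (at 0)" and q: "(q \<longlongrightarrow> 1) (at 0)"
    and dd: "(\<lambda>u. (q u - p u)/2 - u/2) \<in> O[at 0](\<lambda>u. u^2)"
    and c1: "(\<lambda>u. cc p q u - 1) \<in> O[at 0](\<lambda>u. u)"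
  shows "(\<lambda>u. X (p u) (q u) - Y (p u) (q u) - (a n - b n) * (u/2)^(2*n)) \<in> o[at 0](\<lambda>u::real. u^(2*n))"
proof -
  define c where "c = cc p q"
  define w where "w = ww p q"
  define SX where "SX = (\<lambda>x::real. \<Sum>k\<le>n. a k * x^(2*k))"
  define SY where "SY = (\<lambda>x::real. \<Sum>k\<le>n. b k * x^(2*k))"
  have cl: "(c \<longlongrightarrow> 1) (at 0)" unfolding c_def by (rule cc_lim[OF p q])
  have ic: "((\<lambda>u. inverse (c u)) \<longlongrightarrow> inverse 1) (at 0)" by (rule tendsto_inverse[OF cl]) simp
  have uO: "(\<lambda>u::real. u/2) \<in> O[at 0](\<lambda>u. u)" by simp
  have cu: "(\<lambda>u. (c u - 1) * (u/2)) \<in> O[at 0](\<lambda>u::real. u^2)"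
  proof -
    have "(\<lambda>u. (c u - 1) * (u/2)) \<in> O[at 0](\<lambda>u::real. u * u)"
      by (rule landau_o.big_mult[OF c1[folded c_def] uO])
    then show ?thesis by (simp add: power2_eq_square)
  qed
  have wu: "(\<lambda>u. w u - u/2) \<in> O[at 0](\<lambda>u. u^2)"
  proof -
    have "(\<lambda>u. inverse (c u) * (((q u - p u)/2 - u/2) - (c u - 1) * (u/2))) \<in> O[at 0](\<lambda>u. u^2)"
      by (rule big_bounded_mult[OF tendsto_O1[OF ic] sum_in_bigo(2)[OF dd cu]])
    moreover have "eventually (\<lambda>u. inverse (c u) * (((q u - p u)/2 - u/2) - (c u - 1) * (u/2)) = w u - u/2) (at 0)"
      using ev_pos[OF cl]
    proof eventually_elim
      case (elim u)
      then have "c u \<noteq> 0" by simp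
      then show ?case unfolding w_def ww_def c_def[symmetric] by (simp add: c_def cc_def field_simps)
    qed
    ultimately show ?thesis by (rule landau_o.big.in_cong[THEN iffD1, rotated])
  qed
  have u21: "(\<lambda>u::real. u^2) \<in> O[at 0](\<lambda>u. u)" using pow_O[of 1 2] by simp
  have wO: "w \<in> O[at 0](\<lambda>u. u)"
  proof -
    have "(\<lambda>u. (w u - u/2) + u/2) \<in> O[at 0](\<lambda>u. u)"
      by (rule sum_in_bigo(1)[OF landau_o.big_trans[OF wu u21] uO])
    then show ?thesis by simp
  qed
  have wO2: "(\<lambda>u. w u ^ (2*n)) \<in> O[at 0](\<lambda>u. u^(2*n))" by (rule landau_o.big_power[OF wO])
  have EX: "(\<lambda>u. X (p u) (q u) - c u * SX (w u)) \<in> o[at 0](\<lambda>u. u^(2*n))"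
    using landau_o.small_big_trans[OF eval_exp[OF gX p q, of n] wO2[unfolded w_def]]
    unfolding c_def w_def SX_def .
  have EY: "(\<lambda>u. Y (p u) (q u) - c u * SY (w u)) \<in> o[at 0](\<lambda>u. u^(2*n))"
    using landau_o.small_big_trans[OF eval_exp[OF gY p q, of n] wO2[unfolded w_def]]
    unfolding c_def w_def SY_def .
  have alg: "SX x - SY x = (a n - b n) * x^(2*n)" for x
    unfolding SX_def SY_def by (rule sum_agree[OF ag])
  have P1: "(\<lambda>u. w u ^ (2*n) - (u/2)^(2*n)) \<in> o[at 0](\<lambda>u. u^(2*n))"
    by (rule landau_o.big_small_trans[OF powdiff_O[OF wO uO wu, of "2*n"] pow_o]) simp
  have cl0: "((\<lambda>u. c u - 1) \<longlongrightarrow> 0) (at 0)" using cl by (simp add: LIM_zero)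
  have P2: "(\<lambda>u. (c u - 1) * w u ^ (2*n)) \<in> o[at 0](\<lambda>u. u^(2*n))"
    by (rule small_tendsto_mult[OF cl0 wO2])
  have P: "(\<lambda>u. (a n - b n) * ((c u - 1) * w u ^ (2*n) + (w u ^ (2*n) - (u/2)^(2*n)))) \<in> o[at 0](\<lambda>u. u^(2*n))"
    by (rule small_bounded_mult[OF bigo_const sum_in_smallo(1)[OF P2 P1]])
  have "(\<lambda>u. (X (p u) (q u) - c u * SX (w u)) - (Y (p u) (q u) - c u * SY (w u))
      + (a n - b n) * ((c u - 1) * w u ^ (2*n) + (w u ^ (2*n) - (u/2)^(2*n)))) \<in> o[at 0](\<lambda>u. u^(2*n))"
    by (rule sum_in_smallo(1)[OF sum_in_smallo(2)[OF EX EY] P])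
  moreover have "(\<lambda>u. (X (p u) (q u) - c u * SX (w u)) - (Y (p u) (q u) - c u * SY (w u))
      + (a n - b n) * ((c u - 1) * w u ^ (2*n) + (w u ^ (2*n) - (u/2)^(2*n))))
      = (\<lambda>u. X (p u) (q u) - Y (p u) (q u) - (a n - b n) * (u/2)^(2*n))"
  proof (rule ext)
    fix u
    have "c u * SX (w u) - c u * SY (w u) = c u * ((a n - b n) * w u ^ (2*n))"
      using alg[of "w u"] by (simp add: right_diff_distrib[symmetric])
    then show "(X (p u) (q u) - c u * SX (w u)) - (Y (p u) (q u) - c u * SY (w u))
      + (a n - b n) * ((c u - 1) * w u ^ (2*n) + (w u ^ (2*n) - (u/2)^(2*n)))
      = X (p u) (q u) - Y (p u) (q u) - (a n - b n) * (u/2)^(2*n)"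
      by (simp add: algebra_simps)
  qed
  ultimately show ?thesis by simp
qed

lemma fm_O2:
  assumes g: "good X a" shows "(\<lambda>u. fm X u - 1) \<in> O[at 0](\<lambda>u. u^2)"
proof -
  have r: "rem X a 1 \<in> o[at 0](\<lambda>w. w^(2*1))" by (rule good_rem_o[OF g])
  have a0: "a 0 = 1" by (rule good_a0[OF g])
  have "(\<lambda>u. rem X a 1 u + a 1 * u^2) \<in> O[at 0](\<lambda>u. u^2)"
    by (rule sum_in_bigo(1)[OF landau_o.small_imp_big]) (use r in simp_all)
  moreover have "rem X a 1 u + a 1 * u^2 = fm X u - 1" for u
    unfolding rem_def using a0 by (simp add: atMost_Suc)
  ultimately show ?thesis by simp
qed

lemma meanG:
  assumes g: "good X a" and p: "(p \<longlongrightarrow> 1) (at 0)" and q: "(q \<longlongrightarrow> 1) (at 0)"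
    and d: "(\<lambda>u. q u - p u) \<in> O[at 0](\<lambda>u. u)"
  shows "(\<lambda>u. X (p u) (q u) - cc p q u) \<in> O[at 0](\<lambda>u::real. u^2)"
proof -
  have a0: "a 0 = 1" by (rule good_a0[OF g])
  have wO: "ww p q \<in> O[at 0](\<lambda>u. u)" by (rule ww_O[OF p q d])
  have w2: "(\<lambda>u. ww p q u ^ 2) \<in> O[at 0](\<lambda>u. u^2)" by (rule landau_o.big_power[OF wO])
  have E: "(\<lambda>u. X (p u) (q u) - cc p q u * (\<Sum>n\<le>1. a n * (ww p q u)^(2*n))) \<in> O[at 0](\<lambda>u. u^2)"
    using landau_o.big_trans[OF landau_o.small_imp_big[OF eval_exp[OF g p q, of 1]]] w2 by simp
  have c: "(\<lambda>u. cc p q u * (a 1 * ww p q u ^ 2)) \<in> O[at 0](\<lambda>u. u^2)"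
    by (rule big_bounded_mult[OF tendsto_O1[OF cc_lim[OF p q]]]) (use w2 in simp)
  have O: "(\<lambda>u. (X (p u) (q u) - cc p q u * (\<Sum>n\<le>1. a n * (ww p q u)^(2*n))) + cc p q u * (a 1 * ww p q u ^ 2))
        \<in> O[at 0](\<lambda>u. u^2)"
    by (rule sum_in_bigo(1)[OF E c])
  have eq: "(\<lambda>u. (X (p u) (q u) - cc p q u * (\<Sum>n\<le>1. a n * (ww p q u)^(2*n))) + cc p q u * (a 1 * ww p q u ^ 2))
      = (\<lambda>u. X (p u) (q u) - cc p q u)"
    using a0 by (simp add: fun_eq_iff atMost_Suc algebra_simps power2_eq_square)
  show ?thesis using O unfolding eq .
qed

lemma mean_lim:
  fixes F :: "real filter"
  assumes g: "good X a" and p: "(p \<longlongrightarrow> 1) F" and q: "(q \<longlongrightarrow> 1) F"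
  shows "((\<lambda>u. X (p u) (q u)) \<longlongrightarrow> 1) F"
proof -
  have mX: "is_mean X" and hom: "homogeneous_mean X" using g good_def by auto
  have f: "((\<lambda>u. fm X (ww p q u)) \<longlongrightarrow> fm X 0) F"
    by (rule isCont_tendsto_compose[OF fm_cont[OF mX] ww_lim[OF p q]])
  have "((\<lambda>u. cc p q u * fm X (ww p q u)) \<longlongrightarrow> 1 * fm X 0) F"
    by (rule tendsto_mult[OF cc_lim[OF p q] f])
  then have l: "((\<lambda>u. cc p q u * fm X (ww p q u)) \<longlongrightarrow> 1) F" using fm0[OF mX] by simp
  show ?thesis
    by (rule Lim_transform_eventually[OF l]) (use eval_ev[OF hom p q] in \<open>simp add: eq_commute\<close>)
qed

lemma coeff_zero:
  assumes "(\<lambda>u::real. c * u^m) \<in> o[at 0](\<lambda>u. u^m)"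
  shows "c = 0"
proof (rule ccontr)
  assume c: "c \<noteq> 0"
  then have "(\<lambda>u::real. u^m) \<in> o[at 0](\<lambda>u. u^m)" using assms by simp
  then have e: "eventually (\<lambda>u::real. u^m = 0) (at 0)" by (simp add: landau_o.small_refl_iff)
  have e2: "eventually (\<lambda>u::real. u \<noteq> 0) (at 0)" by (simp add: eventually_at_filter)
  have "eventually (\<lambda>u::real. False) (at 0)" using e e2 by eventually_elim simp
  then show False by simp
qed

lemma stable_eq:
  assumes "stable_mean X" "\<bar>u\<bar> < 1"
  shows "fm X u = X (X (1-u) (fm X u)) (X (fm X u) (1+u))"
  using assms(1)[unfolded stable_mean_def, rule_format, of "1-u" "1+u"] assms(2) unfolding fm_def by auto

lemma O_u: "(\<lambda>u::real. u) \<in> O[at 0](\<lambda>u. u)" by simp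
lemma O_u2u: "(\<lambda>u::real. u^2) \<in> O[at 0](\<lambda>u. u)" using pow_O[of 1 2] by simp

lemma bigo_eq: "f \<in> O[F](g) \<Longrightarrow> (\<And>x. f x = h x) \<Longrightarrow> h \<in> O[F](g)"
proof -
  assume "f \<in> O[F](g)" "\<And>x. f x = h x"
  moreover have "f = h" using \<open>\<And>x. f x = h x\<close> by (rule ext)
  ultimately show ?thesis by simp
qed

lemma smallo_eq: "f \<in> o[F](g) \<Longrightarrow> (\<And>x. f x = h x) \<Longrightarrow> h \<in> o[F](g)"
proof -
  assume "f \<in> o[F](g)" "\<And>x. f x = h x"
  moreover have "f = h" using \<open>\<And>x. f x = h x\<close> by (rule ext)
  ultimately show ?thesis by simp
qed

lemma smallo_ev: "f \<in> o[F](g) \<Longrightarrow> eventually (\<lambda>x. f x = h x) F \<Longrightarrow> h \<in> o[F](g)"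
  using landau_o.small.in_cong by blast

lemma bigo_div2: "(f::_\<Rightarrow>real) \<in> O[F](g) \<Longrightarrow> (\<lambda>x. f x / 2) \<in> O[F](g)" by simp
lemma smallo_div2: "(f::_\<Rightarrow>real) \<in> o[F](g) \<Longrightarrow> (\<lambda>x. f x / 2) \<in> o[F](g)" by simp

lemma hb: "(\<lambda>u::real. c * (u/2)^m) \<in> O[F](\<lambda>u. u^m)"
proof -
  have "(\<lambda>u::real. (c / 2^m) * u^m) \<in> O[F](\<lambda>u. u^m)" by simp
  then show ?thesis by (rule bigo_eq) (simp add: power_divide)
qed

lemma stable_coeffs:
  assumes gK: "good K aK" and gN: "good N aN" and sK: "stable_mean K" and sN: "stable_mean N"
    and a1: "aK 1 = aN 1"
  shows "aK n = aN n"
proof (induction n rule: less_induct)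
  case (less n)
  show ?case
  proof (cases "n \<le> 1")
    case True
    then have "n = 0 \<or> n = 1" by auto
    then show ?thesis using a1 good_a0[OF gK] good_a0[OF gN] by auto
  next
    case False
    then have n2: "n \<ge> 2" by simp
    then have n1: "n \<ge> 1" by simp
    have ag: "\<forall>k<n. aK k = aN k" using less.IH by blast
    define \<alpha> where "\<alpha> = aK n - aN n"
    define m where "m = 2*n"
    define fK where "fK = fm K"
    define fN where "fN = fm N"
    define AK where "AK = (\<lambda>u. K (1-u) (fK u))"
    define BK where "BK = (\<lambda>u. K (fK u) (1+u))"
    define AN where "AN = (\<lambda>u. N (1-u) (fN u))"
    define BN where "BN = (\<lambda>u. N (fN u) (1+u))"
    have mK: "is_mean K" and mN: "is_mean N" using gK gN good_def by auto
    have lK: "(fK \<longlongrightarrow> 1) (at 0)" and lN: "(fN \<longlongrightarrow> 1) (at 0)"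
      unfolding fK_def fN_def using fm_lim mK mN by auto
    have l1m: "((\<lambda>u::real. 1 - u) \<longlongrightarrow> 1) (at 0)"
      using tendsto_diff[OF tendsto_const[of 1] tendsto_ident_at[of 0 UNIV]] by simp
    have l1p: "((\<lambda>u::real. 1 + u) \<longlongrightarrow> 1) (at 0)"
      using tendsto_add[OF tendsto_const[of 1] tendsto_ident_at[of 0 UNIV]] by simp
    have O2K: "(\<lambda>u. fK u - 1) \<in> O[at 0](\<lambda>u. u^2)" unfolding fK_def by (rule fm_O2[OF gK])
    have O2N: "(\<lambda>u. fN u - 1) \<in> O[at 0](\<lambda>u. u^2)" unfolding fN_def by (rule fm_O2[OF gN])
    have O1K: "(\<lambda>u. fK u - 1) \<in> O[at 0](\<lambda>u. u)" by (rule landau_o.big_trans[OF O2K O_u2u])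
    have O1N: "(\<lambda>u. fN u - 1) \<in> O[at 0](\<lambda>u. u)" by (rule landau_o.big_trans[OF O2N O_u2u])
    have E0: "(\<lambda>u. fK u - fN u - \<alpha> * u^m) \<in> o[at 0](\<lambda>u. u^m)"
    proof -
      have "(\<lambda>u. rem K aK n u - rem N aN n u) \<in> o[at 0](\<lambda>u. u^(2*n))"
        by (rule sum_in_smallo(2)[OF good_rem_o[OF gK] good_rem_o[OF gN]])
      then show ?thesis unfolding m_def
      proof (rule smallo_eq)
        fix u :: real
        have "(\<Sum>k\<le>n. aK k * u^(2*k)) - (\<Sum>k\<le>n. aN k * u^(2*k)) = \<alpha> * u^(2*n)"
          unfolding \<alpha>_def by (rule sum_agree[OF ag, where x="\<lambda>k. u^(2*k)"])
        then show "rem K aK n u - rem N aN n u = fK u - fN u - \<alpha> * u^(2*n)"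
          unfolding rem_def fK_def fN_def by (simp add: algebra_simps)
      qed
    qed
    have DO: "(\<lambda>u. fK u - fN u) \<in> O[at 0](\<lambda>u. u^m)"
      by (rule bigo_eq[OF sum_in_bigo(1)[OF landau_o.small_imp_big[OF E0], of "\<lambda>u. \<alpha> * u^m"]]) simp_all
    have lAK: "(AK \<longlongrightarrow> 1) (at 0)" unfolding AK_def by (rule mean_lim[OF gK l1m lK])
    have lBK: "(BK \<longlongrightarrow> 1) (at 0)" unfolding BK_def by (rule mean_lim[OF gK lK l1p])
    have lAN: "(AN \<longlongrightarrow> 1) (at 0)" unfolding AN_def by (rule mean_lim[OF gN l1m lN])
    have lBN: "(BN \<longlongrightarrow> 1) (at 0)" unfolding BN_def by (rule mean_lim[OF gN lN l1p])
    have dK1: "(\<lambda>u. fK u - (1 - u)) \<in> O[at 0](\<lambda>u. u)"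
      by (rule bigo_eq[OF sum_in_bigo(1)[OF O1K O_u]]) simp
    have dN1: "(\<lambda>u. fN u - (1 - u)) \<in> O[at 0](\<lambda>u. u)"
      by (rule bigo_eq[OF sum_in_bigo(1)[OF O1N O_u]]) simp
    have dK2: "(\<lambda>u. (1 + u) - fK u) \<in> O[at 0](\<lambda>u. u)"
      by (rule bigo_eq[OF sum_in_bigo(2)[OF O_u O1K]]) simp
    have dN2: "(\<lambda>u. (1 + u) - fN u) \<in> O[at 0](\<lambda>u. u)"
      by (rule bigo_eq[OF sum_in_bigo(2)[OF O_u O1N]]) simp
    have GAK: "(\<lambda>u. AK u - (1 - u/2)) \<in> O[at 0](\<lambda>u. u^2)"
      by (rule bigo_eq[OF sum_in_bigo(1)[OF meanG[OF gK l1m lK dK1] bigo_div2[OF O2K]]])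
         (simp add: AK_def cc_def field_simps)
    have GBK: "(\<lambda>u. BK u - (1 + u/2)) \<in> O[at 0](\<lambda>u. u^2)"
      by (rule bigo_eq[OF sum_in_bigo(1)[OF meanG[OF gK lK l1p dK2] bigo_div2[OF O2K]]])
         (simp add: BK_def cc_def field_simps)
    have GAN: "(\<lambda>u. AN u - (1 - u/2)) \<in> O[at 0](\<lambda>u. u^2)"
      by (rule bigo_eq[OF sum_in_bigo(1)[OF meanG[OF gN l1m lN dN1] bigo_div2[OF O2N]]])
         (simp add: AN_def cc_def field_simps)
    have GBN: "(\<lambda>u. BN u - (1 + u/2)) \<in> O[at 0](\<lambda>u. u^2)"
      by (rule bigo_eq[OF sum_in_bigo(1)[OF meanG[OF gN lN l1p dN2] bigo_div2[OF O2N]]])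
         (simp add: BN_def cc_def field_simps)
    have D1: "(\<lambda>u. K (1-u) (fN u) - N (1-u) (fN u) - \<alpha> * (u/2)^m) \<in> o[at 0](\<lambda>u. u^m)"
    proof -
      have dd: "(\<lambda>u. (fN u - (1-u))/2 - u/2) \<in> O[at 0](\<lambda>u. u^2)"
        by (rule bigo_eq[OF bigo_div2[OF O2N]]) (simp add: field_simps)
      have c1: "(\<lambda>u. cc (\<lambda>u. 1-u) fN u - 1) \<in> O[at 0](\<lambda>u. u)"
        by (rule bigo_eq[OF bigo_div2[OF sum_in_bigo(2)[OF O1N O_u]]]) (simp add: cc_def field_simps)
      show ?thesis using diffXY[OF gK gN n1 ag l1m lN dd c1] unfolding \<alpha>_def m_def .
    qed
    have D2: "(\<lambda>u. K (fN u) (1+u) - N (fN u) (1+u) - \<alpha> * (u/2)^m) \<in> o[at 0](\<lambda>u. u^m)"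
    proof -
      have dd: "(\<lambda>u. ((1+u) - fN u)/2 - u/2) \<in> O[at 0](\<lambda>u. u^2)"
        by (rule bigo_eq[OF bigo_div2[OF landau_o.big.uminus_in_iff[THEN iffD2, OF O2N]]]) (simp add: field_simps)
      have c1: "(\<lambda>u. cc fN (\<lambda>u. 1+u) u - 1) \<in> O[at 0](\<lambda>u. u)"
        by (rule bigo_eq[OF bigo_div2[OF sum_in_bigo(1)[OF O1N O_u]]]) (simp add: cc_def field_simps)
      show ?thesis using diffXY[OF gK gN n1 ag lN l1p dd c1] unfolding \<alpha>_def m_def .
    qed
    have D3: "(\<lambda>u. K (AN u) (BN u) - N (AN u) (BN u) - \<alpha> * (u/2)^m) \<in> o[at 0](\<lambda>u. u^m)"
    proof -
      have dd: "(\<lambda>u. (BN u - AN u)/2 - u/2) \<in> O[at 0](\<lambda>u. u^2)"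
        by (rule bigo_eq[OF bigo_div2[OF sum_in_bigo(2)[OF GBN GAN]]]) (simp add: field_simps)
      have c1: "(\<lambda>u. cc AN BN u - 1) \<in> O[at 0](\<lambda>u. u)"
        by (rule bigo_eq[OF landau_o.big_trans[OF bigo_div2[OF sum_in_bigo(1)[OF GAN GBN]] O_u2u]])
           (simp add: cc_def field_simps)
      show ?thesis using diffXY[OF gK gN n1 ag lAN lBN dd c1] unfolding \<alpha>_def m_def .
    qed
    have z1: "(\<lambda>u::real. (1 - u) - (1 - u)) \<in> O[at 0](\<lambda>u. u^(2*n))" by simp
    have z2: "(\<lambda>u::real. (1 + u) - (1 + u)) \<in> O[at 0](\<lambda>u. u^(2*n))" by simp
    have P1: "(\<lambda>u. K (1-u) (fK u) - K (1-u) (fN u) - (((1-u) - (1-u)) + (fK u - fN u)) / 2) \<in> o[at 0](\<lambda>u. u^m)"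
      unfolding m_def
      by (rule pert[OF gK n1 l1m lK l1m lN dK1 dN1 z1 DO[unfolded m_def]])
    have P2: "(\<lambda>u. K (fK u) (1+u) - K (fN u) (1+u) - ((fK u - fN u) + ((1+u) - (1+u))) / 2) \<in> o[at 0](\<lambda>u. u^m)"
      unfolding m_def
      by (rule pert[OF gK n1 lK l1p lN l1p dK2 dN2 DO[unfolded m_def] z2])
    have AKd: "(\<lambda>u. AK u - AN u) \<in> O[at 0](\<lambda>u. u^m)"
      by (rule bigo_eq[OF sum_in_bigo(1)[OF sum_in_bigo(1)[OF landau_o.small_imp_big[OF P1] bigo_div2[OF DO]]
            sum_in_bigo(1)[OF landau_o.small_imp_big[OF D1] hb[where c=\<alpha> and m=m]]]])
         (simp add: AK_def AN_def field_simps)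
    have BKd: "(\<lambda>u. BK u - BN u) \<in> O[at 0](\<lambda>u. u^m)"
      by (rule bigo_eq[OF sum_in_bigo(1)[OF sum_in_bigo(1)[OF landau_o.small_imp_big[OF P2] bigo_div2[OF DO]]
            sum_in_bigo(1)[OF landau_o.small_imp_big[OF D2] hb[where c=\<alpha> and m=m]]]])
         (simp add: BK_def BN_def field_simps)
    have dKAB: "(\<lambda>u. BK u - AK u) \<in> O[at 0](\<lambda>u. u)"
      by (rule bigo_eq[OF sum_in_bigo(1)[OF sum_in_bigo(2)[OF landau_o.big_trans[OF GBK O_u2u] landau_o.big_trans[OF GAK O_u2u]] O_u]])
         (simp add: field_simps)
    have dNAB: "(\<lambda>u. BN u - AN u) \<in> O[at 0](\<lambda>u. u)"
      by (rule bigo_eq[OF sum_in_bigo(1)[OF sum_in_bigo(2)[OF landau_o.big_trans[OF GBN O_u2u] landau_o.big_trans[OF GAN O_u2u]] O_u]])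
         (simp add: field_simps)
    have P3: "(\<lambda>u. K (AK u) (BK u) - K (AN u) (BN u) - ((AK u - AN u) + (BK u - BN u)) / 2) \<in> o[at 0](\<lambda>u. u^m)"
      unfolding m_def
      by (rule pert[OF gK n1 lAK lBK lAN lBN dKAB dNAB AKd[unfolded m_def] BKd[unfolded m_def]])
    have all: "(\<lambda>u. (K (AK u) (BK u) - K (AN u) (BN u) - ((AK u - AN u) + (BK u - BN u)) / 2)
        + (K (AN u) (BN u) - N (AN u) (BN u) - \<alpha> * (u/2)^m)
        + ((K (1-u) (fK u) - K (1-u) (fN u) - (((1-u) - (1-u)) + (fK u - fN u)) / 2)
          + (K (1-u) (fN u) - N (1-u) (fN u) - \<alpha> * (u/2)^m)
          + (K (fK u) (1+u) - K (fN u) (1+u) - ((fK u - fN u) + ((1+u) - (1+u))) / 2)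
          + (K (fN u) (1+u) - N (fN u) (1+u) - \<alpha> * (u/2)^m)) / 2
        - (fK u - fN u - \<alpha> * u^m) / 2) \<in> o[at 0](\<lambda>u. u^m)"
      by (intro sum_in_smallo P1 P2 P3 D1 D2 D3 E0 smallo_div2)
    have ev: "eventually (\<lambda>u::real. \<bar>u\<bar> < 1) (at 0)" by (rule ev_abs_lt) simp
    have T: "(\<lambda>u. (\<alpha> * (1/2 - 2 / 2^m)) * u^m) \<in> o[at 0](\<lambda>u. u^m)"
    proof (rule smallo_ev[OF all])
      show "eventually (\<lambda>u. (K (AK u) (BK u) - K (AN u) (BN u) - ((AK u - AN u) + (BK u - BN u)) / 2)
        + (K (AN u) (BN u) - N (AN u) (BN u) - \<alpha> * (u/2)^m)
        + ((K (1-u) (fK u) - K (1-u) (fN u) - (((1-u) - (1-u)) + (fK u - fN u)) / 2)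
          + (K (1-u) (fN u) - N (1-u) (fN u) - \<alpha> * (u/2)^m)
          + (K (fK u) (1+u) - K (fN u) (1+u) - ((fK u - fN u) + ((1+u) - (1+u))) / 2)
          + (K (fN u) (1+u) - N (fN u) (1+u) - \<alpha> * (u/2)^m)) / 2
        - (fK u - fN u - \<alpha> * u^m) / 2 = (\<alpha> * (1/2 - 2 / 2^m)) * u^m) (at 0)"
        using ev
      proof eventually_elim
        case (elim u)
        have s1: "K (AK u) (BK u) = fK u"
          using stable_eq[OF sK elim] unfolding AK_def BK_def fK_def by simp
        have s2: "N (AN u) (BN u) = fN u"
          using stable_eq[OF sN elim] unfolding AN_def BN_def fN_def by simp
        have e1: "K (1-u) (fK u) = AK u" "K (fK u) (1+u) = BK u"
          "N (1-u) (fN u) = AN u" "N (fN u) (1+u) = BN u"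
          unfolding AK_def BK_def AN_def BN_def by simp_all
        have pw: "(u/2)^m = u^m / 2^m" by (simp add: power_divide)
        show ?case unfolding s1 s2 e1 pw by (simp add: field_simps)
      qed
    qed
    have "\<alpha> * (1/2 - 2 / 2^m) = 0" by (rule coeff_zero[OF T])
    moreover have "(2::real)^4 \<le> 2^m" unfolding m_def using n2 by (intro power_increasing) auto
    then have "1/2 - 2 / (2::real)^m > 0" by (simp add: field_simps)
    ultimately have "\<alpha> = 0" by simp
    then show ?thesis unfolding \<alpha>_def by simp
  qed
qed

definition CP :: "real \<Rightarrow> real \<Rightarrow> real \<Rightarrow> real \<Rightarrow> real \<Rightarrow> real" where
  "CP c1 c2 c3 c4 u = 1 + c1 * u + c2 * u^2 + c3 * u^3 + c4 * u^4"
definition DP :: "real \<Rightarrow> real \<Rightarrow> real \<Rightarrow> real \<Rightarrow> real \<Rightarrow> real" where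
  "DP d1 d2 d3 d4 u = d1 + d2 * u + d3 * u^2 + d4 * u^3"
definition IP :: "real \<Rightarrow> real \<Rightarrow> real \<Rightarrow> real" where
  "IP c1 c2 u = 1 - c1 * u + (c1^2 - c2) * u^2"
definition TT :: "real \<Rightarrow> real \<Rightarrow> real \<Rightarrow> real \<Rightarrow> real \<Rightarrow> real \<Rightarrow> real" where
  "TT c1 c2 d1 d2 d3 u = d1^2 + (2 * d1 * d2 - c1 * d1^2) * u
     + (c1^2 * d1^2 - 2 * c1 * d1 * d2 - c2 * d1^2 + 2 * d1 * d3 + d2^2) * u^2"
definition RR1 :: "real \<Rightarrow> real \<Rightarrow> real \<Rightarrow> real \<Rightarrow> real \<Rightarrow> real" where
  "RR1 c1 c2 c3 c4 u = (2 * c1 * c2 + c1 * c3 * u + c1 * c4 * u^2 - c1^2 * c2 * u - c1^2 * c3 * u^2 - c1^2 * c4 * u^3 - c1^3 + c2 * c3 * u^2 + c2 * c4 * u^3 + c2^2 * u - c3 - c4 * u)"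
definition RR2 :: "real \<Rightarrow> real \<Rightarrow> real \<Rightarrow> real \<Rightarrow> real \<Rightarrow> real \<Rightarrow> real \<Rightarrow> real" where
  "RR2 c1 c2 d1 d2 d3 d4 u = (- 2 * c1 * d1 * d3 - 2 * c1 * d1 * d4 * u - 2 * c1 * d2 * d3 * u - 2 * c1 * d2 * d4 * u^2 - c1 * d2^2 - 2 * c1 * d3 * d4 * u^3 - c1 * d3^2 * u^2 - c1 * d4^2 * u^4 + 2 * c1^2 * d1 * d2 + 2 * c1^2 * d1 * d3 * u + 2 * c1^2 * d1 * d4 * u^2 + 2 * c1^2 * d2 * d3 * u^2 + 2 * c1^2 * d2 * d4 * u^3 + c1^2 * d2^2 * u + 2 * c1^2 * d3 * d4 * u^4 + c1^2 * d3^2 * u^3 + c1^2 * d4^2 * u^5 - 2 * c2 * d1 * d2 - 2 * c2 * d1 * d3 * u - 2 * c2 * d1 * d4 * u^2 - 2 * c2 * d2 * d3 * u^2 - 2 * c2 * d2 * d4 * u^3 - c2 * d2^2 * u - 2 * c2 * d3 * d4 * u^4 - c2 * d3^2 * u^3 - c2 * d4^2 * u^5 + 2 * d1 * d4 + 2 * d2 * d3 + 2 * d2 * d4 * u + 2 * d3 * d4 * u^2 + d3^2 * u + d4^2 * u^3)"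

lemma id1: "1 - CP c1 c2 c3 c4 u * IP c1 c2 u = u^3 * RR1 c1 c2 c3 c4 u"
  unfolding CP_def IP_def RR1_def by algebra

lemma id2: "DP d1 d2 d3 d4 u ^ 2 * IP c1 c2 u - TT c1 c2 d1 d2 d3 u = u^3 * RR2 c1 c2 d1 d2 d3 d4 u"
  unfolding DP_def IP_def TT_def RR2_def by algebra

lemma cont_O1: "isCont f 0 \<Longrightarrow> (f::real\<Rightarrow>real) \<in> O[at 0](\<lambda>_. 1)"
  by (rule tendsto_O1[of f "f 0"]) (simp add: isCont_def)

lemma o_O: "f \<in> o[at 0](\<lambda>u::real. u^k) \<Longrightarrow> j \<le> k \<Longrightarrow> f \<in> O[at 0](\<lambda>u. u^j)"
  by (rule landau_o.big_trans[OF landau_o.small_imp_big pow_O])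

lemma O_o: "f \<in> O[at 0](\<lambda>u::real. u^k) \<Longrightarrow> j < k \<Longrightarrow> f \<in> o[at 0](\<lambda>u. u^j)"
  by (rule landau_o.big_small_trans[OF _ pow_o])

lemma upow_O: "isCont R 0 \<Longrightarrow> (\<lambda>u::real. u^k * R u) \<in> O[at 0](\<lambda>u. u^k)"
  using landau_o.big.mult_left[OF cont_O1, of R "\<lambda>u. u^k"] by simp

lemma sum2: "(\<Sum>n\<le>(2::nat). f n) = f 0 + f 1 + f 2"
proof -
  have "{..(2::nat)} = {0, 1, 2}" by auto
  then show ?thesis by (simp add: add.assoc)
qed

lemma isCont_CP: "isCont (CP c1 c2 c3 c4) 0" unfolding CP_def[abs_def] by (intro continuous_intros)
lemma isCont_DP: "isCont (DP d1 d2 d3 d4) 0" unfolding DP_def[abs_def] by (intro continuous_intros)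
lemma isCont_IP: "isCont (IP c1 c2) 0" unfolding IP_def[abs_def] by (intro continuous_intros)
lemma isCont_RR1: "isCont (RR1 c1 c2 c3 c4) 0" unfolding RR1_def[abs_def] by (intro continuous_intros)
lemma isCont_RR2: "isCont (RR2 c1 c2 d1 d2 d3 d4) 0" unfolding RR2_def[abs_def] by (intro continuous_intros)

lemma stage:
  fixes c1 c2 c3 c4 d1 d2 d3 d4 :: real
  assumes g: "good X x" and p: "(p \<longlongrightarrow> 1) (at 0)" and q: "(q \<longlongrightarrow> 1) (at 0)"
    and ap: "(\<lambda>u. p u - (CP c1 c2 c3 c4 u - u * DP d1 d2 d3 d4 u)) \<in> o[at 0](\<lambda>u. u^4)"
    and aq: "(\<lambda>u. q u - (CP c1 c2 c3 c4 u + u * DP d1 d2 d3 d4 u)) \<in> o[at 0](\<lambda>u. u^4)"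
  shows "(\<lambda>u. X (p u) (q u) - (CP c1 c2 c3 c4 u + x 1 * (u^2 * TT c1 c2 d1 d2 d3 u) + x 2 * (d1^4 * u^4)))
           \<in> o[at 0](\<lambda>u. u^4)"
proof -
  define C where "C = CP c1 c2 c3 c4"
  define D1 where "D1 = DP d1 d2 d3 d4"
  define I where "I = IP c1 c2"
  define T where "T = TT c1 c2 d1 d2 d3"
  define c where "c = cc p q"
  define dd where "dd = (\<lambda>u. (q u - p u) / 2)"
  define \<iota> where "\<iota> = (\<lambda>u. inverse (c u))"
  define w where "w = ww p q"
  have a0: "x 0 = 1" using good_a0[OF g] .
  have wdd: "w u = \<iota> u * dd u" for u unfolding w_def ww_def \<iota>_def dd_def c_def cc_def
    by (simp only: divide_inverse_commute)

  have cl: "(c \<longlongrightarrow> 1) (at 0)" unfolding c_def by (rule cc_lim[OF p q])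
  have il: "(\<iota> \<longlongrightarrow> 1) (at 0)" unfolding \<iota>_def using tendsto_inverse[OF cl] by simp
  have iO: "\<iota> \<in> O[at 0](\<lambda>_. 1)" by (rule tendsto_O1[OF il])
  have cO: "c \<in> O[at 0](\<lambda>_. 1)" by (rule tendsto_O1[OF cl])
  have C0: "C 0 = 1" unfolding C_def CP_def by simp
  have Cl: "(C \<longlongrightarrow> 1) (at 0)" using isCont_CP[of c1 c2 c3 c4] C0 unfolding C_def isCont_def by simp
  have D1O: "D1 \<in> O[at 0](\<lambda>_. 1)" unfolding D1_def by (rule cont_O1[OF isCont_DP])
  have IO: "I \<in> O[at 0](\<lambda>_. 1)" unfolding I_def by (rule cont_O1[OF isCont_IP])
  have uD: "(\<lambda>u. u * D1 u) \<in> O[at 0](\<lambda>u. u)"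
    by (rule bigo_eq[OF big_bounded_mult[OF D1O O_u]]) (simp add: mult.commute)
  have cC: "(\<lambda>u. c u - C u) \<in> o[at 0](\<lambda>u. u^4)"
    by (rule smallo_eq[OF smallo_div2[OF sum_in_smallo(1)[OF ap aq]]])
       (simp add: C_def D1_def c_def cc_def field_simps)
  have dD: "(\<lambda>u. dd u - u * D1 u) \<in> o[at 0](\<lambda>u. u^4)"
    by (rule smallo_eq[OF smallo_div2[OF sum_in_smallo(2)[OF aq ap]]])
       (simp add: C_def D1_def dd_def field_simps)
  have dD1: "(\<lambda>u. dd u - u * D1 u) \<in> O[at 0](\<lambda>u. u)" using o_O[OF dD, of 1] by simp
  have ddO: "dd \<in> O[at 0](\<lambda>u. u)"
    by (rule bigo_eq[OF sum_in_bigo(1)[OF dD1 uD]]) simp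
  have qpO: "(\<lambda>u. q u - p u) \<in> O[at 0](\<lambda>u. u)"
  proof (rule bigo_eq)
    show "(\<lambda>u. 2 * dd u) \<in> O[at 0](\<lambda>u. u)" using ddO by simp
    show "2 * dd u = q u - p u" for u by (simp add: dd_def)
  qed
  have wO: "w \<in> O[at 0](\<lambda>u. u)" unfolding w_def by (rule ww_O[OF p q qpO])
  have E1: "(\<lambda>u. X (p u) (q u) - c u * (\<Sum>n\<le>2. x n * (w u)^(2*n))) \<in> o[at 0](\<lambda>u. u^4)"
  proof -
    have e: "(\<lambda>u::real. u^(2*2)) = (\<lambda>u. u^4)" by simp
    show ?thesis
      using landau_o.small_big_trans[OF eval_exp[OF g p q, of 2] landau_o.big_power[OF wO[unfolded w_def], of "2*2"]]
      unfolding c_def w_def e .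
  qed
  have ev: "eventually (\<lambda>u. c u > 0) (at 0)" by (rule ev_pos[OF cl])
  have iI: "(\<lambda>u. \<iota> u - I u) \<in> O[at 0](\<lambda>u. u^3)"
  proof -
    have r1: "(\<lambda>u. 1 - C u * I u) \<in> O[at 0](\<lambda>u. u^3)"
      unfolding C_def I_def id1 by (rule upow_O[OF isCont_RR1])
    have r2: "(\<lambda>u. I u * (C u - c u)) \<in> O[at 0](\<lambda>u. u^3)"
    proof -
      have cC': "(\<lambda>u. C u - c u) \<in> o[at 0](\<lambda>u. u^4)"
        by (rule smallo_eq[OF landau_o.small.uminus_in_iff[THEN iffD2, OF cC]]) simp
      show ?thesis using o_O[OF small_bounded_mult[OF IO cC'], of 3] by simp
    qed
    have "(\<lambda>u. \<iota> u * ((1 - C u * I u) + I u * (C u - c u))) \<in> O[at 0](\<lambda>u. u^3)"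
      by (rule big_bounded_mult[OF iO sum_in_bigo(1)[OF r1 r2]])
    moreover have "eventually (\<lambda>u. \<iota> u * ((1 - C u * I u) + I u * (C u - c u)) = \<iota> u - I u) (at 0)"
      using ev by eventually_elim (simp add: \<iota>_def field_simps)
    ultimately show ?thesis by (rule landau_o.big.in_cong[THEN iffD1, rotated])
  qed
  have main2: "(\<lambda>u. dd u ^ 2 * \<iota> u - u^2 * T u) \<in> o[at 0](\<lambda>u. u^4)"
  proof -
    have ddD: "((\<lambda>u. dd u + u * D1 u) \<longlongrightarrow> 0 + 0 * D1 0) (at 0)"
    proof -
      have "(dd \<longlongrightarrow> 0) (at 0)" unfolding dd_def
        using tendsto_divide[OF tendsto_diff[OF q p] tendsto_const, of 2] by simp
      moreover have "(D1 \<longlongrightarrow> D1 0) (at 0)" using isCont_DP unfolding D1_def isCont_def by blast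
      ultimately show ?thesis by (intro tendsto_add tendsto_mult tendsto_ident_at)
    qed
    have A1: "(\<lambda>u. ((dd u + u * D1 u) * \<iota> u) * (dd u - u * D1 u)) \<in> o[at 0](\<lambda>u. u^4)"
      by (rule small_bounded_mult[OF big_bounded_mult[OF tendsto_O1[OF ddD] iO] dD])
    have A2: "(\<lambda>u. (u * D1 u)^2 * (\<iota> u - I u)) \<in> o[at 0](\<lambda>u. u^4)"
    proof -
      have "(\<lambda>u. (u * D1 u)^2 * (\<iota> u - I u)) \<in> O[at 0](\<lambda>u. u^2 * u^3)"
        by (rule landau_o.big_mult[OF landau_o.big_power[OF uD] iI])
      then have "(\<lambda>u. (u * D1 u)^2 * (\<iota> u - I u)) \<in> O[at 0](\<lambda>u. u^5)"
        by (simp add: power_add[symmetric])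
      then show ?thesis by (rule O_o) simp
    qed
    have A3: "(\<lambda>u. u^5 * RR2 c1 c2 d1 d2 d3 d4 u) \<in> o[at 0](\<lambda>u. u^4)"
      by (rule O_o[OF upow_O[OF isCont_RR2]]) simp
    have "(\<lambda>u. ((dd u + u * D1 u) * \<iota> u) * (dd u - u * D1 u) + (u * D1 u)^2 * (\<iota> u - I u)
         + u^5 * RR2 c1 c2 d1 d2 d3 d4 u) \<in> o[at 0](\<lambda>u. u^4)"
      by (intro sum_in_smallo A1 A2 A3)
    then show ?thesis
    proof (rule smallo_eq)
      fix u :: real
      have e: "D1 u ^ 2 * I u - T u = u^3 * RR2 c1 c2 d1 d2 d3 d4 u"
        unfolding D1_def I_def T_def by (rule id2)
      have "u^5 * RR2 c1 c2 d1 d2 d3 d4 u = u^2 * (D1 u ^ 2 * I u - T u)"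
        unfolding e by (simp add: power_add[symmetric] mult_ac)
      then show "((dd u + u * D1 u) * \<iota> u) * (dd u - u * D1 u) + (u * D1 u)^2 * (\<iota> u - I u)
         + u^5 * RR2 c1 c2 d1 d2 d3 d4 u = dd u ^ 2 * \<iota> u - u^2 * T u"
        by (simp add: algebra_simps power2_eq_square)
    qed
  qed
  have main4: "(\<lambda>u. dd u ^ 4 * \<iota> u ^ 3 - d1^4 * u^4) \<in> o[at 0](\<lambda>u. u^4)"
  proof -
    have u2: "(\<lambda>u::real. u * u) \<in> O[at 0](\<lambda>u. u^2)" by (simp add: power2_eq_square)
    have i1: "(\<lambda>u. \<iota> u - 1) \<in> O[at 0](\<lambda>u. u)"
    proof -
      have "(\<lambda>u. I u - 1) \<in> O[at 0](\<lambda>u. u)"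
      proof (rule bigo_eq)
        have ic: "isCont (\<lambda>u::real. - c1 + (c1^2 - c2) * u) 0" by (intro continuous_intros)
        show "(\<lambda>u. u * (- c1 + (c1^2 - c2) * u)) \<in> O[at 0](\<lambda>u. u)"
          using upow_O[OF ic, of 1] by simp
        show "u * (- c1 + (c1^2 - c2) * u) = I u - 1" for u
          unfolding I_def IP_def by (simp add: algebra_simps power2_eq_square)
      qed
      moreover have "(\<lambda>u. \<iota> u - I u) \<in> O[at 0](\<lambda>u. u)"
        by (rule landau_o.big_trans[OF iI]) (use pow_O[of 1 3] in simp)
      ultimately show ?thesis
        by (rule bigo_eq[OF sum_in_bigo(1)]) simp
    qed
    have vO: "(\<lambda>u::real. d1 * u) \<in> O[at 0](\<lambda>u. u)" by simp
    have wd: "(\<lambda>u. w u - d1 * u) \<in> O[at 0](\<lambda>u. u^2)"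
    proof -
      have B1: "(\<lambda>u. \<iota> u * (dd u - u * D1 u)) \<in> O[at 0](\<lambda>u. u^2)"
        by (rule o_O[OF small_bounded_mult[OF iO dD]]) simp
      have B2: "(\<lambda>u. (u * D1 u) * (\<iota> u - 1)) \<in> O[at 0](\<lambda>u. u^2)"
        by (rule landau_o.big_trans[OF landau_o.big_mult[OF uD i1] u2])
      have B3: "(\<lambda>u. u^2 * (d2 + d3 * u + d4 * u^2)) \<in> O[at 0](\<lambda>u. u^2)"
        by (intro upow_O continuous_intros)
      have "(\<lambda>u. \<iota> u * (dd u - u * D1 u) + (u * D1 u) * (\<iota> u - 1) + u^2 * (d2 + d3 * u + d4 * u^2))
             \<in> O[at 0](\<lambda>u. u^2)"
        by (intro sum_in_bigo B1 B2 B3)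
      then show ?thesis
        by (rule bigo_eq) (simp add: wdd D1_def DP_def algebra_simps power2_eq_square power3_eq_cube)
    qed
    have pw: "(\<lambda>u. w u ^ 4 - (d1 * u) ^ 4) \<in> o[at 0](\<lambda>u. u^4)"
      by (rule O_o[OF powdiff_O[OF wO vO wd, of 4]]) simp
    have cl0: "((\<lambda>u. c u - 1) \<longlongrightarrow> 0) (at 0)" using cl by (simp add: LIM_zero)
    have d4O: "(\<lambda>u::real. (d1 * u) ^ 4) \<in> O[at 0](\<lambda>u. u^4)" by (simp add: power_mult_distrib)
    have "(\<lambda>u. c u * (w u ^ 4 - (d1 * u) ^ 4) + (c u - 1) * (d1 * u) ^ 4) \<in> o[at 0](\<lambda>u. u^4)"
      by (rule sum_in_smallo(1)[OF small_bounded_mult[OF cO pw] small_tendsto_mult[OF cl0 d4O]])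
    moreover have "eventually (\<lambda>u. c u * (w u ^ 4 - (d1 * u) ^ 4) + (c u - 1) * (d1 * u) ^ 4
        = dd u ^ 4 * \<iota> u ^ 3 - d1^4 * u^4) (at 0)"
      using ev
    proof eventually_elim
      case (elim u)
      then have "c u \<noteq> 0" by simp
      moreover have "c u * c u ^ 3 = c u ^ 4" by (simp add: eval_nat_numeral)
      ultimately show ?case unfolding wdd \<iota>_def by (simp add: field_simps power_mult_distrib)
    qed
    ultimately show ?thesis by (rule smallo_ev)
  qed
  have "(\<lambda>u. (X (p u) (q u) - c u * (\<Sum>n\<le>2. x n * (w u)^(2*n))) + (c u - C u)
       + x 1 * (dd u ^ 2 * \<iota> u - u^2 * T u) + x 2 * (dd u ^ 4 * \<iota> u ^ 3 - d1^4 * u^4))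
       \<in> o[at 0](\<lambda>u. u^4)"
    by (rule sum_in_smallo(1)[OF sum_in_smallo(1)[OF sum_in_smallo(1)[OF E1 cC]
          small_bounded_mult[OF bigo_const main2]] small_bounded_mult[OF bigo_const main4]])
  moreover have "eventually (\<lambda>u. (X (p u) (q u) - c u * (\<Sum>n\<le>2. x n * (w u)^(2*n))) + (c u - C u)
       + x 1 * (dd u ^ 2 * \<iota> u - u^2 * T u) + x 2 * (dd u ^ 4 * \<iota> u ^ 3 - d1^4 * u^4)
      = X (p u) (q u) - (CP c1 c2 c3 c4 u + x 1 * (u^2 * TT c1 c2 d1 d2 d3 u) + x 2 * (d1^4 * u^4))) (at 0)"
    using ev
  proof eventually_elim
    case (elim u)
    then have cz: "c u \<noteq> 0" by simp
    show ?case unfolding sum2 wdd a0 C_def[symmetric] T_def[symmetric]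
      using cz apply (simp add: \<iota>_def field_simps)
      apply algebra
      done
  qed
  ultimately show ?thesis by (rule smallo_ev)
qed

lemma fm_exp4:
  assumes g: "good Z z"
  shows "(\<lambda>u. fm Z u - (1 + z 1 * u^2 + z 2 * u^4)) \<in> o[at 0](\<lambda>u. u^4)"
proof -
  have r: "rem Z z 2 \<in> o[at 0](\<lambda>w. w^(2*2))" by (rule good_rem_o[OF g])
  have a0: "z 0 = 1" by (rule good_a0[OF g])
  have e: "(\<lambda>w::real. w^(2*2)) = (\<lambda>w. w^4)" by simp
  show ?thesis
  proof (rule smallo_eq[OF r[unfolded e]])
    show "rem Z z 2 u = fm Z u - (1 + z 1 * u^2 + z 2 * u^4)" for u
      unfolding rem_def sum2 using a0 by simp
  qed
qed

lemma neg_filterlim: "filterlim (\<lambda>x::real. - x) (at 0) (at 0)"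
  unfolding filterlim_def filtermap_at_minus by simp

lemma neg_o4: "f \<in> o[at 0](\<lambda>u::real. u^4) \<Longrightarrow> (\<lambda>u. f (- u)) \<in> o[at 0](\<lambda>u. u^4)"
  using landau_o.small.compose[OF _ neg_filterlim, of f "\<lambda>u. u^4"] by simp

lemma fm_pos:
  assumes "is_mean Y" "\<bar>u\<bar> < 1" shows "fm Y u > 0"
proof -
  have pos: "0 < 1 - u" "0 < 1 + u" using assms(2) by auto
  have "min (1-u) (1+u) \<le> Y (1-u) (1+u)" using assms(1) pos unfolding is_mean_def by blast
  moreover have "min (1-u) (1+u) > 0" using pos by simp
  ultimately show ?thesis unfolding fm_def by linarith
qed

lemma polyP: fixes y1 y2 z1 z2 u :: real shows
  "CP (-1/2) (y1/2) 0 (y2/2) u + z1 * (u^2 * TT (-1/2) (y1/2) (1/2) (y1/2) 0 u) + z2 * ((1/2)^4 * u^4)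
   = 1 - u/2 + (y1/2 + z1/4) * u^2 + (z1 * (y1/2 + 1/8)) * u^3 + (y2/2 + z1 * (1/16 + y1/8 + y1^2/4) + z2/16) * u^4"
  unfolding CP_def TT_def by (simp add: algebra_simps power2_eq_square power3_eq_cube power4_eq_xxxx)

lemma polyE: fixes e2 e3 e4 x1 x2 u :: real shows
  "CP 0 e2 0 e4 u + x1 * (u^2 * TT 0 e2 (1/2) 0 (- e3) u) + x2 * ((1/2)^4 * u^4)
   = 1 + (e2 + x1/4) * u^2 + (e4 - x1*e2/4 - x1*e3 + x2/16) * u^4"
  unfolding CP_def TT_def by (simp add: algebra_simps power2_eq_square power3_eq_cube power4_eq_xxxx)

definition Acoef :: "real \<Rightarrow> real \<Rightarrow> real \<Rightarrow> real" where
  "Acoef x1 y1 z1 = y1/2 + z1/4 + x1/4"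
definition Bcoef :: "real \<Rightarrow> real \<Rightarrow> real \<Rightarrow> real \<Rightarrow> real \<Rightarrow> real \<Rightarrow> real" where
  "Bcoef x1 x2 y1 y2 z1 z2 = y2/2 + z2/16 + x2/16 + z1/16 + y1*z1/8 + y1^2*z1/4
     - x1*y1/8 - 3*x1*z1/16 - x1*y1*z1/2"

lemma exp4:
  assumes gX: "good X x" and gY: "good Y y" and gZ: "good Z z"
  shows "(\<lambda>u. X (Z (1-u) (fm Y u)) (Z (fm Y u) (1+u))
     - (1 + Acoef (x 1) (y 1) (z 1) * u^2 + Bcoef (x 1) (x 2) (y 1) (y 2) (z 1) (z 2) * u^4))
     \<in> o[at 0](\<lambda>u. u^4)"
proof -
  define e2 where "e2 = y 1/2 + z 1/4"
  define e3 where "e3 = z 1 * (y 1/2 + 1/8)"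
  define e4 where "e4 = y 2/2 + z 1 * (1/16 + y 1/8 + (y 1)^2/4) + z 2/16"
  define OP where "OP = (\<lambda>u::real. 1 - u/2 + e2 * u^2 + e3 * u^3 + e4 * u^4)"
  define P where "P = (\<lambda>u. Z (1-u) (fm Y u))"
  define Q where "Q = (\<lambda>u. Z (fm Y u) (1+u))"
  have mY: "is_mean Y" and sZ: "symmetric_mean Z" and sY: "symmetric_mean Y"
    using gY gZ good_def by auto
  have ly: "(fm Y \<longlongrightarrow> 1) (at 0)" by (rule fm_lim[OF mY])
  have l1m: "((\<lambda>u::real. 1 - u) \<longlongrightarrow> 1) (at 0)"
    using tendsto_diff[OF tendsto_const[of 1] tendsto_ident_at[of 0 UNIV]] by simp
  have l1p: "((\<lambda>u::real. 1 + u) \<longlongrightarrow> 1) (at 0)"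
    using tendsto_add[OF tendsto_const[of 1] tendsto_ident_at[of 0 UNIV]] by simp
  have apY: "(\<lambda>u. fm Y u - (1 + y 1 * u^2 + y 2 * u^4)) \<in> o[at 0](\<lambda>u. u^4)" by (rule fm_exp4[OF gY])
  have ap1: "(\<lambda>u. (1 - u) - (CP (-1/2) (y 1/2) 0 (y 2/2) u - u * DP (1/2) (y 1/2) 0 (y 2/2) u))
      \<in> o[at 0](\<lambda>u. u^4)"
    by (rule smallo_eq[OF zero_in_smallo]) (simp add: CP_def DP_def algebra_simps power2_eq_square power3_eq_cube power4_eq_xxxx)
  have aq1: "(\<lambda>u. fm Y u - (CP (-1/2) (y 1/2) 0 (y 2/2) u + u * DP (1/2) (y 1/2) 0 (y 2/2) u))
      \<in> o[at 0](\<lambda>u. u^4)"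
    by (rule smallo_eq[OF apY]) (simp add: CP_def DP_def algebra_simps power2_eq_square power3_eq_cube power4_eq_xxxx)
  have SP: "(\<lambda>u. Z (1 - u) (fm Y u) - (CP (-1/2) (y 1/2) 0 (y 2/2) u
      + z 1 * (u^2 * TT (-1/2) (y 1/2) (1/2) (y 1/2) 0 u) + z 2 * ((1/2)^4 * u^4))) \<in> o[at 0](\<lambda>u. u^4)"
    by (rule stage[OF gZ l1m ly ap1 aq1])
  have aP: "(\<lambda>u. P u - OP u) \<in> o[at 0](\<lambda>u. u^4)"
  proof (rule smallo_eq[OF SP])
    fix u :: real
    show "Z (1 - u) (fm Y u) - (CP (-1/2) (y 1/2) 0 (y 2/2) u
      + z 1 * (u^2 * TT (-1/2) (y 1/2) (1/2) (y 1/2) 0 u) + z 2 * ((1/2)^4 * u^4)) = P u - OP u"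
      unfolding P_def OP_def e2_def e3_def e4_def polyP by simp
  qed
  have ev: "eventually (\<lambda>u::real. \<bar>u\<bar> < 1) (at 0)" by (rule ev_abs_lt) simp
  have aQ: "(\<lambda>u. Q u - OP (- u)) \<in> o[at 0](\<lambda>u. u^4)"
  proof (rule smallo_ev[OF neg_o4[OF aP]])
    show "eventually (\<lambda>u. P (- u) - OP (- u) = Q u - OP (- u)) (at 0)"
      using ev
    proof eventually_elim
      case (elim u)
      have "fm Y (-u) = fm Y u" by (rule fm_even[OF sY elim])
      moreover have "fm Y u > 0" by (rule fm_pos[OF mY elim])
      moreover have "1 + u > 0" using elim by simp
      ultimately have "Z (fm Y u) (1+u) = Z (1+u) (fm Y u)"
        using sZ unfolding symmetric_mean_def by blast
      then show ?case unfolding P_def Q_def using \<open>fm Y (-u) = fm Y u\<close> by simp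
    qed
  qed
  have lP: "(P \<longlongrightarrow> 1) (at 0)" unfolding P_def by (rule mean_lim[OF gZ l1m ly])
  have lQ: "(Q \<longlongrightarrow> 1) (at 0)" unfolding Q_def by (rule mean_lim[OF gZ ly l1p])
  have ap2: "(\<lambda>u. P u - (CP 0 e2 0 e4 u - u * DP (1/2) 0 (- e3) 0 u)) \<in> o[at 0](\<lambda>u. u^4)"
    by (rule smallo_eq[OF aP]) (simp add: OP_def CP_def DP_def algebra_simps power2_eq_square power3_eq_cube power4_eq_xxxx)
  have aq2: "(\<lambda>u. Q u - (CP 0 e2 0 e4 u + u * DP (1/2) 0 (- e3) 0 u)) \<in> o[at 0](\<lambda>u. u^4)"
    by (rule smallo_eq[OF aQ]) (simp add: OP_def CP_def DP_def algebra_simps power2_eq_square power3_eq_cube power4_eq_xxxx)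
  have SE: "(\<lambda>u. X (P u) (Q u) - (CP 0 e2 0 e4 u + x 1 * (u^2 * TT 0 e2 (1/2) 0 (- e3) u) + x 2 * ((1/2)^4 * u^4)))
      \<in> o[at 0](\<lambda>u. u^4)"
    by (rule stage[OF gX lP lQ ap2 aq2])
  show ?thesis
  proof (rule smallo_eq[OF SE])
    fix u :: real
    show "X (P u) (Q u) - (CP 0 e2 0 e4 u + x 1 * (u^2 * TT 0 e2 (1/2) 0 (- e3) u) + x 2 * ((1/2)^4 * u^4))
      = X (Z (1-u) (fm Y u)) (Z (fm Y u) (1+u))
     - (1 + Acoef (x 1) (y 1) (z 1) * u^2 + Bcoef (x 1) (x 2) (y 1) (y 2) (z 1) (z 2) * u^4)"
    proof -
      have cA: "e2 + x 1/4 = Acoef (x 1) (y 1) (z 1)" unfolding e2_def Acoef_def by simp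
      have cB: "e4 - x 1 * e2/4 - x 1 * e3 + x 2/16 = Bcoef (x 1) (x 2) (y 1) (y 2) (z 1) (z 2)"
        unfolding e2_def e3_def e4_def Bcoef_def by (simp add: algebra_simps power2_eq_square)
      show ?thesis unfolding polyE cA cB P_def Q_def ..
    qed
  qed
qed

lemma coeffs_unique:
  assumes "(\<lambda>u. g u - (1 + A * u^2 + B * u^4)) \<in> o[at 0](\<lambda>u::real. u^4)"
      and "(\<lambda>u. g u - (1 + A' * u^2 + B' * u^4)) \<in> o[at 0](\<lambda>u::real. u^4)"
  shows "A = A' \<and> B = B'"
proof -
  have d: "(\<lambda>u. (A' - A) * u^2 + (B' - B) * u^4) \<in> o[at 0](\<lambda>u::real. u^4)"
    by (rule smallo_eq[OF sum_in_smallo(2)[OF assms(1) assms(2)]]) (simp add: algebra_simps)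
  have d2: "(\<lambda>u. (A' - A) * u^2 + (B' - B) * u^4) \<in> o[at 0](\<lambda>u::real. u^2)"
    by (rule landau_o.small_big_trans[OF d pow_O]) simp
  have "(\<lambda>u::real. (B' - B) * u^4) \<in> o[at 0](\<lambda>u. u^2)"
    using pow_o[of 2 4] by simp
  from sum_in_smallo(2)[OF d2 this]
  have "(\<lambda>u::real. (A' - A) * u^2) \<in> o[at 0](\<lambda>u. u^2)" by simp
  then have A: "A' - A = 0" by (rule coeff_zero)
  with d have "(\<lambda>u::real. (B' - B) * u^4) \<in> o[at 0](\<lambda>u. u^4)" by simp
  then have "B' - B = 0" by (rule coeff_zero)
  with A show ?thesis by simp
qed

lemma good_of: "is_mean X \<Longrightarrow> symmetric_mean X \<Longrightarrow> homogeneous_mean X \<Longrightarrow> sym_asymp_expansion X a \<Longrightarrow> good X a"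
  unfolding good_def by blast

lemma Bred: fixes a b m :: real shows
  "Bcoef a b a b a m = 9*b/16 + m/16 + (a/16 - 3*a^2/16 - a^3/4)"
  "Bcoef a b a m a b = m/2 + b/8 + (a/16 - 3*a^2/16 - a^3/4)"
  unfolding Bcoef_def by (simp_all add: field_simps power2_eq_square power3_eq_cube)

lemma final_alg: fixes a :: real shows "1/6 * a * (1 + a) * (1 - 4 * a) = 8/3 * (a/16 - 3*a^2/16 - a^3/4)"
  by (simp add: field_simps power2_eq_square power3_eq_cube)

theorem mainTheorem12:
  fixes K N M :: "real \<Rightarrow> real \<Rightarrow> real" and aK aN aM :: "nat \<Rightarrow> real"
  assumes "is_mean K" "symmetric_mean K" "homogeneous_mean K" "stable_mean K"
      and "is_mean N" "symmetric_mean N" "homogeneous_mean N" "stable_mean N"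
      and "is_mean M" "symmetric_mean M" "homogeneous_mean M"
      and "sym_asymp_expansion K aK" "sym_asymp_expansion N aN" "sym_asymp_expansion M aM"
      and "stabilizable K N M" "stabilized K N M"
  shows "aK 1 = aN 1 \<and> aN 1 = aM 1 \<and> (\<forall>n. aK n = aN n) \<and>
         aM 2 = 1/6 * aM 1 * (1 + aM 1) * (1 - 4 * aM 1)"
proof -
  have gK: "good K aK" by (rule good_of) (use assms in auto)
  have gN: "good N aN" by (rule good_of) (use assms in auto)
  have gM: "good M aM" by (rule good_of) (use assms in auto)
  have ev: "eventually (\<lambda>u::real. \<bar>u\<bar> < 1) (at 0)" by (rule ev_abs_lt) simp
  have X0: "(\<lambda>u. fm M u - (1 + aM 1 * u^2 + aM 2 * u^4)) \<in> o[at 0](\<lambda>u. u^4)" by (rule fm_exp4[OF gM])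
  have e1: "eventually (\<lambda>u. K (M (1-u) (fm N u)) (M (fm N u) (1+u))
      - (1 + Acoef (aK 1) (aN 1) (aM 1) * u^2 + Bcoef (aK 1) (aK 2) (aN 1) (aN 2) (aM 1) (aM 2) * u^4)
    = fm M u - (1 + Acoef (aK 1) (aN 1) (aM 1) * u^2 + Bcoef (aK 1) (aK 2) (aN 1) (aN 2) (aM 1) (aM 2) * u^4)) (at 0)"
    using ev
  proof eventually_elim
    case (elim u)
    have "0 < 1 - u" "0 < 1 + u" using elim by auto
    then have "M (1-u) (1+u) = K (M (1-u) (N (1-u) (1+u))) (M (N (1-u) (1+u)) (1+u))"
      using assms(15) unfolding stabilizable_def by blast
    then show ?case unfolding fm_def by simp
  qed
  have X1: "(\<lambda>u. fm M u - (1 + Acoef (aK 1) (aN 1) (aM 1) * u^2 + Bcoef (aK 1) (aK 2) (aN 1) (aN 2) (aM 1) (aM 2) * u^4))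
      \<in> o[at 0](\<lambda>u. u^4)"
    by (rule smallo_ev[OF exp4[OF gK gN gM] e1])
  have e2: "eventually (\<lambda>u. K (N (1-u) (fm M u)) (N (fm M u) (1+u))
      - (1 + Acoef (aK 1) (aM 1) (aN 1) * u^2 + Bcoef (aK 1) (aK 2) (aM 1) (aM 2) (aN 1) (aN 2) * u^4)
    = fm M u - (1 + Acoef (aK 1) (aM 1) (aN 1) * u^2 + Bcoef (aK 1) (aK 2) (aM 1) (aM 2) (aN 1) (aN 2) * u^4)) (at 0)"
    using ev
  proof eventually_elim
    case (elim u)
    have "0 < 1 - u" "0 < 1 + u" using elim by auto
    then have "M (1-u) (1+u) = K (N (1-u) (M (1-u) (1+u))) (N (M (1-u) (1+u)) (1+u))"
      using assms(16) unfolding stabilized_def by blast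
    then show ?case unfolding fm_def by simp
  qed
  have X2: "(\<lambda>u. fm M u - (1 + Acoef (aK 1) (aM 1) (aN 1) * u^2 + Bcoef (aK 1) (aK 2) (aM 1) (aM 2) (aN 1) (aN 2) * u^4))
      \<in> o[at 0](\<lambda>u. u^4)"
    by (rule smallo_ev[OF exp4[OF gK gM gN] e2])
  from coeffs_unique[OF X1 X0]
  have A1: "Acoef (aK 1) (aN 1) (aM 1) = aM 1" and B1: "Bcoef (aK 1) (aK 2) (aN 1) (aN 2) (aM 1) (aM 2) = aM 2"
    by auto
  from coeffs_unique[OF X2 X0]
  have A2: "Acoef (aK 1) (aM 1) (aN 1) = aM 1" and B2: "Bcoef (aK 1) (aK 2) (aM 1) (aM 2) (aN 1) (aN 2) = aM 2"
    by auto
  have n1: "aN 1 = aM 1" and k1: "aK 1 = aM 1" using A1 A2 unfolding Acoef_def by linarith+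
  have all: "\<forall>n. aK n = aN n"
    using stable_coeffs[OF gK gN assms(4) assms(8)] k1 n1 by auto
  have k2: "aK 2 = aN 2" using all by blast
  have q1: "aM 2 = 9 * aK 2 / 16 + aM 2 / 16 + (aM 1/16 - 3*(aM 1)^2/16 - (aM 1)^3/4)"
    using B1 unfolding n1 k1 k2[symmetric] Bred(1) by simp
  have q2: "aM 2 = aM 2 / 2 + aK 2 / 8 + (aM 1/16 - 3*(aM 1)^2/16 - (aM 1)^3/4)"
    using B2 unfolding n1 k1 k2[symmetric] Bred(2) by simp
  define T where "T = aM 1/16 - 3*(aM 1)^2/16 - (aM 1)^3/4"
  have "aM 2 = 8/3 * T" using q1 q2 unfolding T_def[symmetric] by linarith
  then have "aM 2 = 8/3 * (aM 1/16 - 3*(aM 1)^2/16 - (aM 1)^3/4)" unfolding T_def .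
  then have "aM 2 = 1/6 * aM 1 * (1 + aM 1) * (1 - 4 * aM 1)" unfolding final_alg .
  then show ?thesis using k1 n1 all by simp
qed


end
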